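(* Let $\Theta\subseteq\mathbb{R}$ and let $X$ be a random variable with probability density function or probability mass function $$f_X(x,\theta)=h(x)\exp\big(\eta(\theta)T(x)-A(\theta)\big),\qquad\theta\in\Theta,$$ where $T,h,\eta,A$ are known functions with $\eta,A$ differentiable on $\Theta$. Let $X_1,\dots,X_n$ be i.i.d. samples of $X$, let $\widehat{\boldsymbol\theta}=\frac1n\sum_{i=1}^nT(X_i)$, and for $z,\theta\in\Theta$ define $$\mathscr{M}(z,\theta)=\left[\frac{\exp(\eta(\theta)z-A(\theta))}{\exp(\eta(z)z-A(z))}\right]^n .$$ Suppose $\frac{d\eta(\theta)}{d\theta}>0$ for $\theta\in\Theta$. Then $$\Pr\{\widehat{\boldsymbol\theta}\ge z\mid\theta\}\le\mathscr{M}(z,\theta)\Pr\{\widehat{\boldsymbol\theta}\ge z\mid z\}\quad\text{for } z,\theta\in\Theta,\ z\ge\theta,$$ $$\Pr\{\widehat{\boldsymbol\theta}\le z\mid\theta\}\le\mathscr{M}(z,\theta)\Pr\{\widehat{\boldsymbol\theta}\le z\mid z\}\quad\text{for } z,\theta\in\Theta,\ z\le\theta.$$ Moreover, if additionally $\frac{dA(\theta)}{d\theta}=\theta\frac{d\eta(\theta)}{d\theta}$ on $\Theta$, then: (i) $\widehat{\boldsymbol\theta}$ is a maximum-likelihood and unbiased estimator of $\theta$; (ii) $\mathscr{M}(z,\theta)=\inf_{t\in\mathbb{R}}\mathbb{E}\big[\exp(nt(\widehat{\boldsymbol\theta}-z))\big]$ (expectation under parameter $\theta$), the infimum being attained at $t=\eta(z)-\eta(\theta)$;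 (iii) for fixed $z\in\Theta$, $\mathscr{M}(z,\theta)$ is increasing in $\theta\in\Theta$ with $\theta\le z$ and decreasing in $\theta\in\Theta$ with $\theta\ge z$; (iv) for fixed $\theta\in\Theta$, $\mathscr{M}(z,\theta)$ is increasing in $z\in\Theta$ with $z\le\theta$ and decreasing in $z\in\Theta$ with $z\ge\theta$; (v) for $z\in\Theta$, $$\Pr\{\widehat{\boldsymbol\theta}\ge z\mid z\}\le\frac12+\frac{C_{\mathrm{BE}}}{\sqrt n}\frac{\mathbb{E}[|T(X)-z|^3]}{\mathbb{E}^{3/2}[|T(X)-z|^2]}\le\frac12+\frac{C_{\mathrm{BE}}}{\sqrt n}\frac{\mathbb{E}^{3/4}[|T(X)-z|^4]}{\mathbb{E}^{3/2}[|T(X)-z|^2]},$$ $$\Pr\{\widehat{\boldsymbol\theta}\le z\mid z\}\le\frac12+\frac{C_{\mathrm{BE}}}{\sqrt n}\frac{\mathbb{E}[|T(X)-z|^3]}{\mathbb{E}^{3/2}[|T(X)-z|^2]}\le\frac12+\frac{C_{\mathrm{BE}}}{\sqrt n}\frac{\mathbb{E}^{3/4}[|T(X)-z|^4]}{\mathbb{E}^{3/2}[|T(X)-z|^2]},$$ where the expectations are taken with parameter $\theta=z$.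
   Context: $\Pr\{\cdot\mid\theta\}$ denotes probability when the samples have parameter $\theta$. $C_{\mathrm{BE}}$ denotes the absolute constant in the Berry–Esseen inequality: for i.i.d. samples $Y_1,Y_2,\dots$ of a random variable $Y$ with $\mathbb{E}[Y]=0$, $\mathbb{E}[Y^2]>0$, $\mathbb{E}[|Y|^3]<\infty$, if $F_n$ is the cdf of $\sum_{i=1}^nY_i/\sqrt{n\mathbb{E}[Y^2]}$ and $\Phi$ the standard normal cdf, then $|F_n(y)-\Phi(y)|\le\frac{C_{\mathrm{BE}}}{\sqrt n}\frac{\mathbb{E}[|Y|^3]}{\mathbb{E}^{3/2}[Y^2]}$ for all $y$ and $n$ (it is known that one may take $C_{\mathrm{BE}}<0.4785$). *)

theory Defs
  imports "HOL-Probability.Probability"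
begin

text \<open>Density (pdf or pmf, w.r.t. a base measure mu) of the one-parameter exponential family
  f(x,theta) = h(x) exp(eta(theta) T(x) - A(theta)).\<close>
definition expfam_density ::
  "('a \<Rightarrow> real) \<Rightarrow> ('a \<Rightarrow> real) \<Rightarrow> (real \<Rightarrow> real) \<Rightarrow> (real \<Rightarrow> real) \<Rightarrow> real \<Rightarrow> 'a \<Rightarrow> real" where
  "expfam_density h T \<eta> A \<theta> x = h x * exp (\<eta> \<theta> * T x - A \<theta>)"

definition expfam_law ::
  "'a measure \<Rightarrow> ('a \<Rightarrow> real) \<Rightarrow> ('a \<Rightarrow> real) \<Rightarrow> (real \<Rightarrow> real) \<Rightarrow> (real \<Rightarrow> real) \<Rightarrow> real \<Rightarrow> 'a measure" where
  "expfam_law \<mu> h T \<eta> A \<theta> = density \<mu> (\<lambda>x. ennreal (expfam_density h T \<eta> A \<theta> x))"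

definition sample_law ::
  "'a measure \<Rightarrow> ('a \<Rightarrow> real) \<Rightarrow> ('a \<Rightarrow> real) \<Rightarrow> (real \<Rightarrow> real) \<Rightarrow> (real \<Rightarrow> real) \<Rightarrow> nat \<Rightarrow> real \<Rightarrow> (nat \<Rightarrow> 'a) measure" where
  "sample_law \<mu> h T \<eta> A n \<theta> = PiM {..<n} (\<lambda>_. expfam_law \<mu> h T \<eta> A \<theta>)"

definition theta_hat :: "('a \<Rightarrow> real) \<Rightarrow> nat \<Rightarrow> (nat \<Rightarrow> 'a) \<Rightarrow> real" where
  "theta_hat T n x = (\<Sum>i<n. T (x i)) / real n"

definition likelihood ::
  "('a \<Rightarrow> real) \<Rightarrow> ('a \<Rightarrow> real) \<Rightarrow> (real \<Rightarrow> real) \<Rightarrow> (real \<Rightarrow> real) \<Rightarrow> nat \<Rightarrow> real \<Rightarrow> (nat \<Rightarrow> 'a) \<Rightarrow> real" where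
  "likelihood h T \<eta> A n \<theta> x = (\<Prod>i<n. expfam_density h T \<eta> A \<theta> (x i))"

definition M_fun :: "(real \<Rightarrow> real) \<Rightarrow> (real \<Rightarrow> real) \<Rightarrow> nat \<Rightarrow> real \<Rightarrow> real \<Rightarrow> real" where
  "M_fun \<eta> A n z \<theta> = (exp (\<eta> \<theta> * z - A \<theta>) / exp (\<eta> z * z - A z)) ^ n"

definition std_normal_cdf :: "real \<Rightarrow> real" where
  "std_normal_cdf y = measure (density lborel (\<lambda>t. ennreal (std_normal_density t))) {..y}"

definition berry_esseen_const :: "real \<Rightarrow> bool" where
  "berry_esseen_const C \<longleftrightarrow>
    (\<forall>Q :: real measure. prob_space Q \<and> sets Q = sets borel \<and>
       integrable Q (\<lambda>y. \<bar>y\<bar> ^ 3) \<and> (\<integral>y. y \<partial>Q) = 0 \<and> (\<integral>y. y\<^sup>2 \<partial>Q) > 0 \<longrightarrow>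
       (\<forall>n::nat. \<forall>y::real. n \<ge> 1 \<longrightarrow>
          \<bar>measure (PiM {..<n} (\<lambda>_. Q))
              {x \<in> space (PiM {..<n} (\<lambda>_. Q)).
                 (\<Sum>i<n. x i) / sqrt (real n * (\<integral>t. t\<^sup>2 \<partial>Q)) \<le> y}
           - std_normal_cdf y\<bar>
          \<le> C / sqrt (real n) * ((\<integral>t. \<bar>t\<bar> ^ 3 \<partial>Q) / (\<integral>t. t\<^sup>2 \<partial>Q) powr (3/2))))"

end

theory Submission
  imports Defs
begin


lemma exp_convex_le:
  fixes l w :: real
  assumes "0 \<le> l" "l \<le> 1"
  shows "exp (l * w) \<le> l * exp w + (1 - l)"
proof -
  have c: "convex_on UNIV exp" by (rule convex_on_exp[of 1, simplified])
  have "exp (l * w + (1 - l) * 0) \<le> l * exp w + (1 - l) * exp 0"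
    using convex_onD[OF c, of "1 - l" w 0] assms by auto
  then show ?thesis by simp
qed

lemma expquot_mono:
  fixes u v t :: real
  assumes "0 < u" "u \<le> v"
  shows "(exp (u * t) - 1) / u \<le> (exp (v * t) - 1) / v"
proof -
  have "exp ((u / v) * (v * t)) \<le> (u / v) * exp (v * t) + (1 - u / v)"
    using assms by (intro exp_convex_le) auto
  moreover have "(u / v) * (v * t) = u * t" using assms by auto
  ultimately have "exp (u * t) \<le> (u / v) * exp (v * t) + (1 - u / v)" by simp
  then have "v * exp (u * t) \<le> v * ((u / v) * exp (v * t) + (1 - u / v))"
    using assms by (intro mult_left_mono) auto
  also have "\<dots> = u * exp (v * t) + (v - u)" using assms by (simp add: field_simps)
  finally have "v * exp (u * t) \<le> u * exp (v * t) + (v - u)" .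
  then show ?thesis using assms by (simp add: field_simps)
qed

lemma expquot_lim:
  fixes u :: "nat \<Rightarrow> real" and t :: real
  assumes "u \<longlonglongrightarrow> 0" "\<And>k. u k \<noteq> 0"
  shows "(\<lambda>k. (exp (u k * t) - 1) / u k) \<longlonglongrightarrow> t"
proof -
  have d: "((\<lambda>y. exp (y * t)) has_field_derivative (exp (0 * t) * t)) (at 0)"
    by (auto intro!: derivative_eq_intros)
  have "((\<lambda>y. (exp (y * t) - exp (0 * t)) / (y - 0)) \<longlongrightarrow> t) (at 0)"
    using d[unfolded has_field_derivative_iff] by simp
  moreover have "filterlim u (at 0) sequentially"
    using assms by (auto simp: filterlim_at intro!: always_eventually)
  ultimately have "(\<lambda>k. (exp (u k * t) - exp (0 * t)) / (u k - 0)) \<longlonglongrightarrow> t"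
    by (rule filterlim_compose)
  then show ?thesis by simp
qed

lemma mean_from_mgf:
  fixes P :: "'a measure" and T :: "'a \<Rightarrow> real" and u c :: "nat \<Rightarrow> real"
  assumes P: "prob_space P" and Tm[measurable]: "T \<in> borel_measurable P"
    and upos: "\<And>k. u k > 0" and udec: "decseq u" and ulim: "u \<longlonglongrightarrow> 0"
    and int: "\<And>k. integrable P (\<lambda>x. exp (u k * T x))"
    and ceq: "\<And>k. (\<integral>x. exp (u k * T x) \<partial>P) = c k"
    and clim: "(\<lambda>k. (c k - 1) / u k) \<longlonglongrightarrow> L"
  shows "integrable P T \<and> (\<integral>x. T x \<partial>P) = L"
proof -
  interpret prob_space P by fact
  define f where "f k x = (exp (u k * T x) - 1) / u k" for k x
  define g where "g k x = f 0 x - f k x" for k x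
  have fint: "integrable P (f k)" for k
    unfolding f_def by (intro integrable_divide Bochner_Integration.integrable_diff int integrable_const)
  have fI: "(\<integral>x. f k x \<partial>P) = (c k - 1) / u k" for k
    unfolding f_def using int ceq by (simp add: prob_space)
  have gint: "integrable P (g k)" for k
    unfolding g_def by (intro Bochner_Integration.integrable_diff fint)
  have gI: "(\<integral>x. g k x \<partial>P) = (c 0 - 1) / u 0 - (c k - 1) / u k" for k
    unfolding g_def using fint fI by simp
  have fmono: "f k x \<le> f j x" if "j \<le> k" for j k x
    unfolding f_def using upos udec that by (intro expquot_mono) (auto simp: decseq_def)
  have gnn: "0 \<le> g k x" for k x unfolding g_def using fmono[of 0 k] by simp
  have gmono: "mono (\<lambda>k. g k x)" for x
    unfolding g_def mono_def using fmono by (simp add: le_diff_eq)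
  have flim: "(\<lambda>k. f k x) \<longlonglongrightarrow> T x" for x
    unfolding f_def using expquot_lim[OF ulim, of "T x"] upos
    by (metis less_irrefl)
  have glim: "(\<lambda>k. g k x) \<longlonglongrightarrow> f 0 x - T x" for x
    unfolding g_def by (intro tendsto_intros flim)
  have gIlim: "(\<lambda>k. \<integral>x. g k x \<partial>P) \<longlonglongrightarrow> (c 0 - 1) / u 0 - L"
    unfolding gI by (intro tendsto_intros clim)
  have fm: "f 0 \<in> borel_measurable P" using fint by auto
  have um: "(\<lambda>x. f 0 x - T x) \<in> borel_measurable P" using fm by measurable
  have mc: "integrable P (\<lambda>x. f 0 x - T x)" "(\<integral>x. f 0 x - T x \<partial>P) = (c 0 - 1) / u 0 - L"
    using integral_monotone_convergence_nonneg[of P g "\<lambda>x. f 0 x - T x", OF gint _ _ _ gIlim um]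
      gmono gnn glim by auto
  have eq: "T = (\<lambda>x. f 0 x - (f 0 x - T x))" by auto
  have "integrable P T" by (subst eq, intro Bochner_Integration.integrable_diff fint mc)
  moreover have "(\<integral>x. T x \<partial>P) = L"
    by (subst eq, subst Bochner_Integration.integral_diff[OF fint mc(1)]) (simp add: fI mc(2))
  ultimately show ?thesis by blast
qed

lemma PiM_density_prob:
  fixes P :: "'a measure" and r :: "'a \<Rightarrow> ennreal"
  assumes P: "prob_space P" and rm[measurable]: "r \<in> borel_measurable P"
    and Q: "prob_space (density P r)" and I: "finite I"
  shows "PiM I (\<lambda>_. density P r) = density (PiM I (\<lambda>_. P)) (\<lambda>x. \<Prod>i\<in>I. r (x i))"
proof -
  interpret Q: product_sigma_finite "\<lambda>_. density P r"
    unfolding product_sigma_finite_def using Q prob_space_imp_sigma_finite by blast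
  interpret P: product_sigma_finite "\<lambda>_. P"
    unfolding product_sigma_finite_def using P prob_space_imp_sigma_finite by blast
  have sets_eq: "sets (PiM I (\<lambda>_. density P r)) = sets (PiM I (\<lambda>_. P))"
    by (intro sets_PiM_cong) auto
  have "density (PiM I (\<lambda>_. P)) (\<lambda>x. \<Prod>i\<in>I. r (x i)) = PiM I (\<lambda>_. density P r)"
  proof (rule Q.PiM_eqI[OF I])
    show "sets (density (PiM I (\<lambda>_. P)) (\<lambda>x. \<Prod>i\<in>I. r (x i))) = sets (PiM I (\<lambda>_. density P r))"
      using sets_eq by simp
  next
    fix A assume A: "\<And>i. i \<in> I \<Longrightarrow> A i \<in> sets (density P r)"
    then have A': "\<And>i. i \<in> I \<Longrightarrow> A i \<in> sets P" by simp
    have pm: "(\<lambda>x. \<Prod>i\<in>I. r (x i)) \<in> borel_measurable (PiM I (\<lambda>_. P))"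
      by measurable
    have "emeasure (density (PiM I (\<lambda>_. P)) (\<lambda>x. \<Prod>i\<in>I. r (x i))) (Pi\<^sub>E I A)
        = (\<integral>\<^sup>+ x. (\<Prod>i\<in>I. r (x i)) * indicator (Pi\<^sub>E I A) x \<partial>PiM I (\<lambda>_. P))"
      using A' I by (intro emeasure_density pm) (auto intro!: sets_PiM_I_finite)
    also have "\<dots> = (\<integral>\<^sup>+ x. (\<Prod>i\<in>I. r (x i) * indicator (A i) (x i)) \<partial>PiM I (\<lambda>_. P))"
    proof (intro nn_integral_cong)
      fix x assume "x \<in> space (PiM I (\<lambda>_. P))"
      then have "x \<in> extensional I" by (auto simp: space_PiM PiE_def)
      then have "indicator (Pi\<^sub>E I A) x = (\<Prod>i\<in>I. indicator (A i) (x i) :: ennreal)"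
        using I by (auto simp: indicator_def PiE_def Pi_def extensional_def prod_zero_iff)
      then show "(\<Prod>i\<in>I. r (x i)) * indicator (Pi\<^sub>E I A) x = (\<Prod>i\<in>I. r (x i) * indicator (A i) (x i))"
        by (simp add: prod.distrib)
    qed
    also have "\<dots> = (\<Prod>i\<in>I. \<integral>\<^sup>+ y. r y * indicator (A i) y \<partial>P)"
      using A' by (intro P.product_nn_integral_prod I) auto
    also have "\<dots> = (\<Prod>i\<in>I. emeasure (density P r) (A i))"
      using A' by (intro prod.cong refl) (simp add: emeasure_density)
    finally show "emeasure (density (PiM I (\<lambda>_. P)) (\<lambda>x. \<Prod>i\<in>I. r (x i))) (Pi\<^sub>E I A)
        = (\<Prod>i\<in>I. emeasure (density P r) (A i))" .
  qed
  then show ?thesis by simp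
qed

lemma std_normal_cdf_0: "std_normal_cdf 0 = 1 / 2"
proof -
  define D where "D = density lborel (\<lambda>t. ennreal (std_normal_density t))"
  interpret D: prob_space D unfolding D_def by (rule prob_space_normal_density) simp
  have spD: "space D = UNIV" and sD: "sets D = sets borel" unfolding D_def by auto
  have sym: "std_normal_density (- x) = std_normal_density x" for x
    by (simp add: normal_density_def)
  have "emeasure D {0<..} = (\<integral>\<^sup>+ x. ennreal (std_normal_density x) * indicator {0<..} x \<partial>lborel)"
    unfolding D_def by (simp add: emeasure_density)
  also have "\<dots> = (\<integral>\<^sup>+ x. ennreal (std_normal_density x) * indicator {0<..} x \<partial>distr lborel borel uminus)"
    by (simp add: lborel_distr_uminus)
  also have "\<dots> = (\<integral>\<^sup>+ x. ennreal (std_normal_density (- x)) * indicator {0<..} (- x) \<partial>lborel)"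
    by (subst nn_integral_distr) auto
  also have "\<dots> = (\<integral>\<^sup>+ x. ennreal (std_normal_density x) * indicator {..<0} x \<partial>lborel)"
    by (intro nn_integral_cong) (auto simp: sym indicator_def)
  also have "\<dots> = emeasure D {..<0}"
    unfolding D_def by (simp add: emeasure_density)
  finally have e1: "emeasure D {0<..} = emeasure D {..<0}" .
  then have m1: "measure D {0<..} = measure D {..<0}" by (simp add: measure_def)
  have "emeasure D {0} = (\<integral>\<^sup>+ x. ennreal (std_normal_density x) * indicator {0} x \<partial>lborel)"
    unfolding D_def by (rule emeasure_density) auto
  also have "\<dots> = (\<integral>\<^sup>+ x. (0::ennreal) \<partial>(lborel::real measure))"
    using AE_lborel_singleton[of "0::real"] by (intro nn_integral_cong_AE) (auto elim!: eventually_mono)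
  finally have "emeasure D {0} = 0" by simp
  then have m0: "measure D {0} = 0" by (simp add: measure_def)
  have "measure D ({..<0} \<union> {0}) = measure D {..<0} + measure D {0}"
    by (intro D.finite_measure_Union) (auto simp: sD)
  moreover have "{..<0} \<union> {0} = {..(0::real)}" by auto
  ultimately have m2: "measure D {..0} = measure D {..<0}"
    using m0 by simp
  have "measure D ({..0} \<union> {0<..}) = measure D {..0} + measure D {0<..}"
    by (intro D.finite_measure_Union) (auto simp: sD)
  moreover have "{..0} \<union> {0<..} = (UNIV :: real set)" by auto
  ultimately have "1 = measure D {..0} + measure D {0<..}"
    using D.prob_space spD by simp
  then have "measure D {..0} = 1/2" using m1 m2 by simp
  then show ?thesis unfolding std_normal_cdf_def D_def .
qed

lemma mvt_within:
  fixes g g' :: "real \<Rightarrow> real"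
  assumes iv: "is_interval S"
    and d: "\<And>x. x \<in> S \<Longrightarrow> (g has_real_derivative g' x) (at x within S)"
    and a: "a \<in> S" and b: "b \<in> S" and ab: "a < b"
  shows "\<exists>\<xi>. a < \<xi> \<and> \<xi> < b \<and> g b - g a = (b - a) * g' \<xi>"
proof -
  have sub: "{a..b} \<subseteq> S"
    using mem_is_interval_1_I[OF iv a b] by auto
  have "continuous_on {a..b} g"
    unfolding continuous_on_eq_continuous_within
  proof
    fix x assume x: "x \<in> {a..b}"
    then have "continuous (at x within S) g"
      using d[of x] sub x by (intro DERIV_continuous) blast
    then show "continuous (at x within {a..b}) g"
      using sub by (rule continuous_within_subset)
  qed
  moreover have dd: "(g has_real_derivative g' x) (at x)" if "a < x" "x < b" for x
  proof -
    have "(g has_real_derivative g' x) (at x within {a<..<b})"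
      using sub that by (intro has_field_derivative_subset[OF d[of x]]) auto
    moreover have "at x within {a<..<b} = at x" using that by (intro at_within_open) auto
    ultimately show ?thesis by simp
  qed
  moreover have "g differentiable (at x)" if "a < x" "x < b" for x
    using dd[OF that] real_differentiable_def by blast
  ultimately obtain l z where z: "a < z" "z < b" "DERIV g z :> l" "g b - g a = (b - a) * l"
    using MVT[OF ab] by blast
  have "l = g' z" using DERIV_unique[OF z(3) dd[OF z(1,2)]] .
  then show ?thesis using z by blast
qed

lemma mono_within:
  fixes g g' :: "real \<Rightarrow> real"
  assumes iv: "is_interval S"
    and d: "\<And>x. x \<in> S \<Longrightarrow> (g has_real_derivative g' x) (at x within S)"
    and a: "a \<in> S" and b: "b \<in> S" and ab: "a \<le> b"
    and nn: "\<And>x. a < x \<Longrightarrow> x < b \<Longrightarrow> g' x \<ge> 0"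
  shows "g a \<le> g b"
proof (cases "a = b")
  case False
  then obtain \<xi> where "a < \<xi>" "\<xi> < b" "g b - g a = (b - a) * g' \<xi>"
    using mvt_within[OF iv d a b] ab by force
  moreover have "0 \<le> (b - a) * g' \<xi>" using nn calculation ab by simp
  ultimately show ?thesis by simp
qed simp




locale expfam =
  fixes \<mu> :: "'a measure"
    and h T :: "'a \<Rightarrow> real"
    and \<eta> A \<eta>' A' :: "real \<Rightarrow> real"
    and \<Theta> :: "real set"
    and n :: nat
  assumes interval: "is_interval \<Theta>"
    and h_meas[measurable]: "h \<in> borel_measurable \<mu>"
    and T_meas[measurable]: "T \<in> borel_measurable \<mu>"
    and h_nonneg: "\<And>x. x \<in> space \<mu> \<Longrightarrow> h x \<ge> 0"
    and is_density: "\<And>\<theta>. \<theta> \<in> \<Theta> \<Longrightarrow> prob_space (expfam_law \<mu> h T \<eta> A \<theta>)"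
    and \<eta>_deriv: "\<And>\<theta>. \<theta> \<in> \<Theta> \<Longrightarrow> (\<eta> has_real_derivative \<eta>' \<theta>) (at \<theta> within \<Theta>)"
    and A_deriv: "\<And>\<theta>. \<theta> \<in> \<Theta> \<Longrightarrow> (A has_real_derivative A' \<theta>) (at \<theta> within \<Theta>)"
    and \<eta>'_pos: "\<And>\<theta>. \<theta> \<in> \<Theta> \<Longrightarrow> \<eta>' \<theta> > 0"
    and n_pos: "n \<ge> 1"
begin

abbreviation "P \<theta> \<equiv> expfam_law \<mu> h T \<eta> A \<theta>"
abbreviation "Pn \<theta> \<equiv> sample_law \<mu> h T \<eta> A n \<theta>"

definition r :: "real \<Rightarrow> real \<Rightarrow> 'a \<Rightarrow> real" where
  "r \<theta> s x = exp ((\<eta> \<theta> - \<eta> s) * T x - A \<theta> + A s)"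

lemma sets_P[simp]: "sets (P \<theta>) = sets \<mu>"
  by (simp add: expfam_law_def)

lemma space_P[simp]: "space (P \<theta>) = space \<mu>"
  by (simp add: expfam_law_def)

lemma T_meas_P[measurable]: "T \<in> borel_measurable (P \<theta>)"
  using measurable_cong_sets[OF sets_P[of \<theta>] refl, of borel] T_meas by blast

lemma dens_meas[measurable]: "(\<lambda>x. expfam_density h T \<eta> A \<theta> x) \<in> borel_measurable \<mu>"
  unfolding expfam_density_def by measurable

lemma r_meas[measurable]: "r \<theta> s \<in> borel_measurable M" if "T \<in> borel_measurable M" for M
  using that unfolding r_def by measurable

lemma expT_meas[measurable]: "(\<lambda>x. exp (c * T x)) \<in> borel_measurable \<mu>"
  by measurable

lemma r_pos: "r \<theta> s x > 0" unfolding r_def by simp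

lemma P_tilt:
  shows "P \<theta> = density (P s) (\<lambda>x. ennreal (r \<theta> s x))"
proof -
  have "density (P s) (\<lambda>x. ennreal (r \<theta> s x))
      = density \<mu> (\<lambda>x. ennreal (expfam_density h T \<eta> A s x) * ennreal (r \<theta> s x))"
    unfolding expfam_law_def by (rule density_density_eq) measurable
  also have "\<dots> = density \<mu> (\<lambda>x. ennreal (expfam_density h T \<eta> A \<theta> x))"
  proof (rule density_cong)
    show "AE x in \<mu>. ennreal (expfam_density h T \<eta> A s x) * ennreal (r \<theta> s x)
        = ennreal (expfam_density h T \<eta> A \<theta> x)"
    proof (rule AE_I2)
      fix x assume x: "x \<in> space \<mu>"
      have "expfam_density h T \<eta> A s x * r \<theta> s x = expfam_density h T \<eta> A \<theta> x"
        unfolding expfam_density_def r_def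
        by (simp add: mult.assoc exp_add[symmetric]) (simp add: algebra_simps)
      moreover have "expfam_density h T \<eta> A s x \<ge> 0"
        unfolding expfam_density_def using h_nonneg[OF x] by simp
      ultimately show "ennreal (expfam_density h T \<eta> A s x) * ennreal (r \<theta> s x)
        = ennreal (expfam_density h T \<eta> A \<theta> x)"
        using r_pos[of \<theta> s x] by (simp add: ennreal_mult[symmetric])
    qed
  qed measurable
  finally show ?thesis unfolding expfam_law_def by simp
qed

lemma nn_P_tilt:
  assumes [measurable]: "g \<in> borel_measurable \<mu>"
  shows "(\<integral>\<^sup>+x. g x \<partial>P \<theta>) = (\<integral>\<^sup>+x. ennreal (r \<theta> s x) * g x \<partial>P s)"
proof -
  have gm: "g \<in> borel_measurable (P s)"
    using measurable_cong_sets[OF sets_P[of s] refl, of borel] assms by blast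
  have rm: "(\<lambda>x. ennreal (r \<theta> s x)) \<in> borel_measurable (P s)" by measurable
  show ?thesis by (subst P_tilt[of \<theta> s]) (rule nn_integral_density[OF rm gm])
qed

lemma mgf_nn:
  assumes s: "s \<in> \<Theta>"
  shows "(\<integral>\<^sup>+x. ennreal (exp ((\<eta> s - \<eta> \<theta>) * T x)) \<partial>P \<theta>) = ennreal (exp (A s - A \<theta>))"
proof -
  interpret Ps: prob_space "P s" using is_density[OF s] .
  have "(\<integral>\<^sup>+x. ennreal (exp ((\<eta> s - \<eta> \<theta>) * T x)) \<partial>P \<theta>)
      = (\<integral>\<^sup>+x. ennreal (r \<theta> s x) * ennreal (exp ((\<eta> s - \<eta> \<theta>) * T x)) \<partial>P s)"
    by (rule nn_P_tilt) (intro measurable_compose[OF expT_meas measurable_ennreal])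
  also have "\<dots> = (\<integral>\<^sup>+x. ennreal (exp (A s - A \<theta>)) \<partial>P s)"
  proof (rule nn_integral_cong)
    fix x
    have "r \<theta> s x * exp ((\<eta> s - \<eta> \<theta>) * T x) = exp (A s - A \<theta>)"
      unfolding r_def by (simp add: exp_add[symmetric]) (simp add: algebra_simps)
    then show "ennreal (r \<theta> s x) * ennreal (exp ((\<eta> s - \<eta> \<theta>) * T x)) = ennreal (exp (A s - A \<theta>))"
      using r_pos[of \<theta> s x] by (simp add: ennreal_mult[symmetric])
  qed
  also have "\<dots> = ennreal (exp (A s - A \<theta>))"
    using Ps.emeasure_space_1 by simp
  finally show ?thesis .
qed

lemma mgf_int:
  assumes s: "s \<in> \<Theta>"
  shows "integrable (P \<theta>) (\<lambda>x. exp ((\<eta> s - \<eta> \<theta>) * T x))"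
    and "(\<integral>x. exp ((\<eta> s - \<eta> \<theta>) * T x) \<partial>P \<theta>) = exp (A s - A \<theta>)"
proof -
  show "integrable (P \<theta>) (\<lambda>x. exp ((\<eta> s - \<eta> \<theta>) * T x))"
    using mgf_nn[OF s, of \<theta>] by (intro integrableI_nonneg) auto
  show "(\<integral>x. exp ((\<eta> s - \<eta> \<theta>) * T x) \<partial>P \<theta>) = exp (A s - A \<theta>)"
    by (subst integral_eq_nn_integral) (auto simp: mgf_nn[OF s])
qed

lemma \<eta>_strict_mono:
  assumes "a \<in> \<Theta>" "b \<in> \<Theta>" "a < b"
  shows "\<eta> a < \<eta> b"
proof -
  obtain \<xi> where \<xi>: "a < \<xi>" "\<xi> < b" "\<eta> b - \<eta> a = (b - a) * \<eta>' \<xi>"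
    using mvt_within[OF interval \<eta>_deriv assms] by blast
  have "\<xi> \<in> \<Theta>" using mem_is_interval_1_I[OF interval assms(1,2)] \<xi> by auto
  then have "\<eta>' \<xi> > 0" by (rule \<eta>'_pos)
  then have "(b - a) * \<eta>' \<xi> > 0" using assms by simp
  then show ?thesis using \<xi> by simp
qed

lemma \<eta>_mono: "a \<in> \<Theta> \<Longrightarrow> b \<in> \<Theta> \<Longrightarrow> a \<le> b \<Longrightarrow> \<eta> a \<le> \<eta> b"
  using \<eta>_strict_mono by (cases "a = b") (auto intro: less_imp_le)

lemma \<eta>_cont: "\<theta> \<in> \<Theta> \<Longrightarrow> (\<eta> \<longlongrightarrow> \<eta> \<theta>) (at \<theta> within \<Theta>)"
  using DERIV_continuous[OF \<eta>_deriv] by (simp add: continuous_within)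

lemma quot_lim:
  assumes \<theta>: "\<theta> \<in> \<Theta>" and sT: "\<And>k. s k \<in> \<Theta>" and sne: "\<And>k. s k \<noteq> \<theta>"
    and slim: "s \<longlonglongrightarrow> \<theta>" and A'eq: "A' \<theta> = \<theta> * \<eta>' \<theta>"
  shows "(\<lambda>k. (exp (A (s k) - A \<theta>) - 1) / (\<eta> (s k) - \<eta> \<theta>)) \<longlonglongrightarrow> \<theta>"
proof -
  have F: "filterlim s (at \<theta> within \<Theta>) sequentially"
    using sT sne slim by (auto simp: filterlim_at intro!: always_eventually)
  have dA: "((\<lambda>y. exp (A y - A \<theta>)) has_real_derivative exp (A \<theta> - A \<theta>) * (A' \<theta> - 0)) (at \<theta> within \<Theta>)"
    using A_deriv[OF \<theta>] by (auto intro!: derivative_eq_intros)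
  then have qA: "((\<lambda>y. (exp (A y - A \<theta>) - 1) / (y - \<theta>)) \<longlongrightarrow> A' \<theta>) (at \<theta> within \<Theta>)"
    unfolding has_field_derivative_iff by simp
  have q\<eta>: "((\<lambda>y. (\<eta> y - \<eta> \<theta>) / (y - \<theta>)) \<longlongrightarrow> \<eta>' \<theta>) (at \<theta> within \<Theta>)"
    using \<eta>_deriv[OF \<theta>] unfolding has_field_derivative_iff .
  have "(\<lambda>k. ((exp (A (s k) - A \<theta>) - 1) / (s k - \<theta>)) / ((\<eta> (s k) - \<eta> \<theta>) / (s k - \<theta>)))
      \<longlonglongrightarrow> A' \<theta> / \<eta>' \<theta>"
    using \<eta>'_pos[OF \<theta>] by (intro tendsto_divide filterlim_compose[OF qA F] filterlim_compose[OF q\<eta> F]) auto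
  moreover have "(\<lambda>k. ((exp (A (s k) - A \<theta>) - 1) / (s k - \<theta>)) / ((\<eta> (s k) - \<eta> \<theta>) / (s k - \<theta>)))
      = (\<lambda>k. (exp (A (s k) - A \<theta>) - 1) / (\<eta> (s k) - \<eta> \<theta>))"
  proof
    fix k have "s k - \<theta> \<noteq> 0" using sne[of k] by simp
    then show "((exp (A (s k) - A \<theta>) - 1) / (s k - \<theta>)) / ((\<eta> (s k) - \<eta> \<theta>) / (s k - \<theta>))
      = (exp (A (s k) - A \<theta>) - 1) / (\<eta> (s k) - \<eta> \<theta>)" by (simp add: divide_simps)
  qed
  moreover have "A' \<theta> / \<eta>' \<theta> = \<theta>" using A'eq \<eta>'_pos[OF \<theta>] by simp
  ultimately show ?thesis by simp
qed

lemma mean: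
  assumes A'eq: "\<forall>\<theta>\<in>\<Theta>. A' \<theta> = \<theta> * \<eta>' \<theta>" and two: "\<exists>a\<in>\<Theta>. \<exists>b\<in>\<Theta>. a < b"
    and \<theta>: "\<theta> \<in> \<Theta>"
  shows "integrable (P \<theta>) T \<and> (\<integral>x. T x \<partial>P \<theta>) = \<theta>"
proof -
  interpret Pt: prob_space "P \<theta>" using is_density[OF \<theta>] .
  obtain s0 where s0: "s0 \<in> \<Theta>" "s0 \<noteq> \<theta>" using two by (metis less_irrefl)
  define e where "e k = inverse (real (Suc k))" for k
  have epos: "0 < e k" "e k \<le> 1" for k unfolding e_def by (auto simp: field_simps)
  have edec: "e (Suc k) \<le> e k" for k unfolding e_def by (auto simp: field_simps)
  have elim: "e \<longlonglongrightarrow> 0" unfolding e_def by (rule LIMSEQ_inverse_real_of_nat)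
  define s where "s k = \<theta> + (s0 - \<theta>) * e k" for k
  have slim: "s \<longlonglongrightarrow> \<theta>" unfolding s_def using tendsto_add[OF tendsto_const tendsto_mult[OF tendsto_const elim]]
    by simp
  have sne: "s k \<noteq> \<theta>" for k using s0 epos[of k] unfolding s_def by auto
  have sT: "s k \<in> \<Theta>" for k
  proof (cases "s0 < \<theta>")
    case True
    have p1: "(\<theta> - s0) * e k \<ge> 0" "(\<theta> - s0) * (1 - e k) \<ge> 0" using True epos[of k] by simp_all
    have "s0 \<le> s k" "s k \<le> \<theta>" unfolding s_def using p1 by (simp_all add: algebra_simps)
    then show ?thesis using mem_is_interval_1_I[OF interval s0(1) \<theta>] by auto
  next
    case False
    then have "\<theta> < s0" using s0 by auto
    then have p1: "(s0 - \<theta>) * e k \<ge> 0" "(s0 - \<theta>) * (1 - e k) \<ge> 0" using epos[of k] by simp_all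
    have "\<theta> \<le> s k" "s k \<le> s0" unfolding s_def using p1 by (simp_all add: algebra_simps)
    then show ?thesis using mem_is_interval_1_I[OF interval \<theta> s0(1)] by auto
  qed
  have ql: "(\<lambda>k. (exp (A (s k) - A \<theta>) - 1) / (\<eta> (s k) - \<eta> \<theta>)) \<longlonglongrightarrow> \<theta>"
    using quot_lim[OF \<theta> sT sne slim] A'eq \<theta> by auto
  have \<eta>lim: "(\<lambda>k. \<eta> (s k)) \<longlonglongrightarrow> \<eta> \<theta>"
  proof -
    have F: "filterlim s (at \<theta> within \<Theta>) sequentially"
      using sT sne slim by (auto simp: filterlim_at intro!: always_eventually)
    show ?thesis by (rule filterlim_compose[OF \<eta>_cont[OF \<theta>] F])
  qed
  show ?thesis
  proof (cases "s0 < \<theta>")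
    case False
    then have gt: "\<theta> < s0" using s0 by auto
    have sgt: "\<theta> < s k" for k unfolding s_def using gt epos[of k] by simp
    have sdec: "s (Suc k) \<le> s k" for k unfolding s_def using gt edec[of k] by simp
    define u where "u k = \<eta> (s k) - \<eta> \<theta>" for k
    have upos: "u k > 0" for k unfolding u_def using \<eta>_strict_mono[OF \<theta> sT sgt] by simp
    have udec: "decseq u" unfolding u_def
      by (intro decseq_SucI) (simp add: \<eta>_mono[OF sT sT sdec])
    have ulim: "u \<longlonglongrightarrow> 0" unfolding u_def using tendsto_diff[OF \<eta>lim tendsto_const[of "\<eta> \<theta>"]] by simp
    have "integrable (P \<theta>) T \<and> (\<integral>x. T x \<partial>P \<theta>) = \<theta>"
      using mean_from_mgf[OF is_density[OF \<theta>] T_meas_P upos udec ulim, of "\<lambda>k. exp (A (s k) - A \<theta>)" \<theta>]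
        mgf_int[OF sT] ql unfolding u_def by auto
    then show ?thesis .
  next
    case True
    have slt: "s k < \<theta>" for k unfolding s_def using True epos[of k] by (simp add: mult_neg_pos)
    have sinc: "s k \<le> s (Suc k)" for k unfolding s_def using True edec[of k]
      by (simp add: mult_left_mono_neg)
    define u where "u k = \<eta> \<theta> - \<eta> (s k)" for k
    have upos: "u k > 0" for k unfolding u_def using \<eta>_strict_mono[OF sT \<theta> slt] by simp
    have udec: "decseq u" unfolding u_def
      by (intro decseq_SucI) (simp add: \<eta>_mono[OF sT sT sinc])
    have ulim: "u \<longlonglongrightarrow> 0" unfolding u_def using tendsto_diff[OF tendsto_const[of "\<eta> \<theta>"] \<eta>lim] by simp
    have eqf: "(\<lambda>x. exp (u k * - T x)) = (\<lambda>x. exp ((\<eta> (s k) - \<eta> \<theta>) * T x))" for k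
      unfolding u_def by (simp add: algebra_simps)
    have ql': "(\<lambda>k. (exp (A (s k) - A \<theta>) - 1) / u k) \<longlonglongrightarrow> - \<theta>"
    proof -
      have "(\<lambda>k. (exp (A (s k) - A \<theta>) - 1) / u k) = (\<lambda>k. - ((exp (A (s k) - A \<theta>) - 1) / (\<eta> (s k) - \<eta> \<theta>)))"
        unfolding u_def by (simp add: fun_eq_iff divide_simps) (simp add: field_simps)
      then show ?thesis using tendsto_minus[OF ql] by simp
    qed
    have Tm: "(\<lambda>x. - T x) \<in> borel_measurable (P \<theta>)" by measurable
    have "integrable (P \<theta>) (\<lambda>x. - T x) \<and> (\<integral>x. - T x \<partial>P \<theta>) = - \<theta>"
      using mean_from_mgf[OF is_density[OF \<theta>] Tm upos udec ulim, of "\<lambda>k. exp (A (s k) - A \<theta>)" "- \<theta>"]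
        mgf_int[OF sT] ql' unfolding eqf by auto
    then show ?thesis by simp
  qed
qed

end



context expfam begin

lemma Pn_def: "Pn \<theta> = PiM {..<n} (\<lambda>_. P \<theta>)"
  by (simp add: sample_law_def)

lemma prob_Pn: "\<theta> \<in> \<Theta> \<Longrightarrow> prob_space (Pn \<theta>)"
  unfolding Pn_def by (rule prob_space_PiM) (rule is_density)

lemma space_Pn: "space (Pn \<theta>) = space (PiM {..<n} (\<lambda>_. \<mu>))"
  unfolding Pn_def by (simp add: space_PiM)

lemma sets_Pn: "sets (Pn \<theta>) = sets (Pn s)"
  unfolding Pn_def by (intro sets_PiM_cong) auto

lemma Pn_tilt:
  assumes \<theta>: "\<theta> \<in> \<Theta>" and s: "s \<in> \<Theta>"
  shows "Pn \<theta> = density (Pn s) (\<lambda>x. \<Prod>i<n. ennreal (r \<theta> s (x i)))"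
proof -
  have "Pn \<theta> = PiM {..<n} (\<lambda>_. density (P s) (\<lambda>x. ennreal (r \<theta> s x)))"
    unfolding Pn_def using P_tilt[of \<theta> s] by simp
  also have "\<dots> = density (PiM {..<n} (\<lambda>_. P s)) (\<lambda>x. \<Prod>i<n. ennreal (r \<theta> s (x i)))"
  proof (rule PiM_density_prob)
    show "prob_space (P s)" by (rule is_density[OF s])
    show "(\<lambda>x. ennreal (r \<theta> s x)) \<in> borel_measurable (P s)"
      by (intro measurable_compose[OF r_meas[OF T_meas_P] measurable_ennreal])
    show "prob_space (density (P s) (\<lambda>x. ennreal (r \<theta> s x)))"
      using P_tilt[of \<theta> s] is_density[OF \<theta>] by simp
  qed simp
  finally show ?thesis unfolding Pn_def .
qed

lemma theta_hat_meas: "theta_hat T n \<in> borel_measurable (Pn \<theta>)"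
proof -
  have "(\<lambda>x. T (x i)) \<in> borel_measurable (Pn \<theta>)" if "i < n" for i
    unfolding Pn_def using that
    by (intro measurable_compose[OF measurable_component_singleton[of i "{..<n}" "\<lambda>_. P \<theta>"] T_meas_P]) auto
  then have "(\<lambda>x. \<Sum>i<n. T (x i)) \<in> borel_measurable (Pn \<theta>)"
    by (intro borel_measurable_sum) auto
  then show ?thesis unfolding theta_hat_def[abs_def] by (intro borel_measurable_divide) auto
qed

lemma prod_r:
  "(\<Prod>i<n. r \<theta> s (x i)) = exp ((\<eta> \<theta> - \<eta> s) * (\<Sum>i<n. T (x i)) - real n * (A \<theta> - A s))"
proof -
  have "(\<Prod>i<n. r \<theta> s (x i)) = exp (\<Sum>i<n. (\<eta> \<theta> - \<eta> s) * T (x i) - (A \<theta> - A s))"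
    unfolding r_def by (simp add: exp_sum algebra_simps)
  also have "(\<Sum>i<n. (\<eta> \<theta> - \<eta> s) * T (x i) - (A \<theta> - A s))
      = (\<eta> \<theta> - \<eta> s) * (\<Sum>i<n. T (x i)) - real n * (A \<theta> - A s)"
    by (simp add: sum_subtractf sum_distrib_left)
  finally show ?thesis .
qed

lemma M_fun_eq: "M_fun \<eta> A n z \<theta> = exp (real n * ((\<eta> \<theta> - \<eta> z) * z - (A \<theta> - A z)))"
  unfolding M_fun_def by (simp add: exp_diff[symmetric] exp_of_nat_mult[symmetric] algebra_simps)

lemma chernoff_generic:
  assumes \<theta>: "\<theta> \<in> \<Theta>" and z: "z \<in> \<Theta>" and E: "E \<in> sets (Pn z)"
    and cond: "\<And>x. x \<in> E \<Longrightarrow> (\<eta> \<theta> - \<eta> z) * (\<Sum>i<n. T (x i)) \<le> (\<eta> \<theta> - \<eta> z) * (real n * z)"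
  shows "measure (Pn \<theta>) E \<le> M_fun \<eta> A n z \<theta> * measure (Pn z) E"
proof -
  interpret Pt: prob_space "Pn \<theta>" using prob_Pn[OF \<theta>] .
  interpret Pz: prob_space "Pn z" using prob_Pn[OF z] .
  let ?M = "M_fun \<eta> A n z \<theta>"
  have Mnn: "?M \<ge> 0" unfolding M_fun_eq by simp
  have rm: "(\<lambda>x. \<Prod>i<n. ennreal (r \<theta> z (x i))) \<in> borel_measurable (Pn z)"
  proof -
    have "(\<lambda>x. ennreal (r \<theta> z (x i))) \<in> borel_measurable (Pn z)" if "i < n" for i
      unfolding Pn_def using that
      by (intro measurable_compose[OF measurable_component_singleton[of i "{..<n}" "\<lambda>_. P z"]
            measurable_compose[OF r_meas[OF T_meas_P] measurable_ennreal]]) auto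
    then show ?thesis by (intro borel_measurable_prod_ennreal) auto
  qed
  have "emeasure (Pn \<theta>) E = (\<integral>\<^sup>+x. (\<Prod>i<n. ennreal (r \<theta> z (x i))) * indicator E x \<partial>Pn z)"
    by (subst Pn_tilt[OF \<theta> z]) (rule emeasure_density[OF rm E])
  also have "\<dots> \<le> (\<integral>\<^sup>+x. ennreal ?M * indicator E x \<partial>Pn z)"
  proof (rule nn_integral_mono)
    fix x
    show "(\<Prod>i<n. ennreal (r \<theta> z (x i))) * indicator E x \<le> ennreal ?M * indicator E x"
    proof (cases "x \<in> E")
      case True
      have "(\<Prod>i<n. ennreal (r \<theta> z (x i))) = ennreal (\<Prod>i<n. r \<theta> z (x i))"
        by (rule prod_ennreal) (simp add: less_imp_le r_pos)
      also have "(\<Prod>i<n. r \<theta> z (x i)) \<le> ?M"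
        unfolding prod_r M_fun_eq using cond[OF True] by (simp add: algebra_simps)
      finally show ?thesis using True by (simp add: ennreal_leI)
    qed simp
  qed
  also have "\<dots> = ennreal ?M * emeasure (Pn z) E"
    using E by (rule nn_integral_cmult_indicator)
  finally have "ennreal (measure (Pn \<theta>) E) \<le> ennreal (?M * measure (Pn z) E)"
    using E sets_Pn[of \<theta> z] by (simp add: Pt.emeasure_eq_measure Pz.emeasure_eq_measure ennreal_mult Mnn)
  then show ?thesis using Mnn by (simp add: ennreal_le_iff)
qed

lemma hat_ge_iff: "theta_hat T n x \<ge> z \<longleftrightarrow> (\<Sum>i<n. T (x i)) \<ge> real n * z"
  using n_pos unfolding theta_hat_def by (simp add: le_divide_eq mult.commute)

lemma hat_le_iff: "theta_hat T n x \<le> z \<longleftrightarrow> (\<Sum>i<n. T (x i)) \<le> real n * z"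
  using n_pos unfolding theta_hat_def by (simp add: divide_le_eq mult.commute)

lemma part1:
  assumes z: "z \<in> \<Theta>" and \<theta>: "\<theta> \<in> \<Theta>" and le: "\<theta> \<le> z"
  shows "measure (Pn \<theta>) {x \<in> space (Pn \<theta>). theta_hat T n x \<ge> z}
       \<le> M_fun \<eta> A n z \<theta> * measure (Pn z) {x \<in> space (Pn z). theta_hat T n x \<ge> z}"
proof -
  have sp: "space (Pn \<theta>) = space (Pn z)" by (simp add: space_Pn)
  have E: "{x \<in> space (Pn z). theta_hat T n x \<ge> z} \<in> sets (Pn z)"
    using theta_hat_meas[of z] by measurable
  have neg: "\<eta> \<theta> - \<eta> z \<le> 0" using \<eta>_mono[OF \<theta> z le] by simp
  show ?thesis unfolding sp
    by (rule chernoff_generic[OF \<theta> z E]) (use neg in \<open>auto simp: hat_ge_iff intro: mult_left_mono_neg\<close>)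
qed

lemma part2:
  assumes z: "z \<in> \<Theta>" and \<theta>: "\<theta> \<in> \<Theta>" and le: "z \<le> \<theta>"
  shows "measure (Pn \<theta>) {x \<in> space (Pn \<theta>). theta_hat T n x \<le> z}
       \<le> M_fun \<eta> A n z \<theta> * measure (Pn z) {x \<in> space (Pn z). theta_hat T n x \<le> z}"
proof -
  have sp: "space (Pn \<theta>) = space (Pn z)" by (simp add: space_Pn)
  have E: "{x \<in> space (Pn z). theta_hat T n x \<le> z} \<in> sets (Pn z)"
    using theta_hat_meas[of z] by measurable
  have pos: "\<eta> \<theta> - \<eta> z \<ge> 0" using \<eta>_mono[OF z \<theta> le] by simp
  show ?thesis unfolding sp
    by (rule chernoff_generic[OF \<theta> z E]) (use pos in \<open>auto simp: hat_le_iff intro: mult_left_mono\<close>)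
qed

end



context expfam begin

definition Lf :: "real \<Rightarrow> real \<Rightarrow> real" where "Lf z \<theta> = \<eta> \<theta> * z - A \<theta>"

lemma Lf_deriv: "\<theta> \<in> \<Theta> \<Longrightarrow> (Lf z has_real_derivative (\<eta>' \<theta> * z - A' \<theta>)) (at \<theta> within \<Theta>)"
  unfolding Lf_def[abs_def] using \<eta>_deriv A_deriv by (auto intro!: derivative_eq_intros)

lemma in_between: "a \<in> \<Theta> \<Longrightarrow> b \<in> \<Theta> \<Longrightarrow> a \<le> x \<Longrightarrow> x \<le> b \<Longrightarrow> x \<in> \<Theta>"
  using mem_is_interval_1_I[OF interval] by blast

context
  assumes A'eq: "\<forall>\<theta>\<in>\<Theta>. A' \<theta> = \<theta> * \<eta>' \<theta>"
begin

lemma Lf_mono: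
  assumes "z \<in> \<Theta>" "a \<in> \<Theta>" "b \<in> \<Theta>" "a \<le> b" "b \<le> z"
  shows "Lf z a \<le> Lf z b"
proof (rule mono_within[OF interval Lf_deriv assms(2,3,4)])
  fix x assume x: "a < x" "x < b"
  then have "x \<in> \<Theta>" using in_between[OF assms(2,3)] by auto
  then have "\<eta>' x * z - A' x = \<eta>' x * (z - x)" using A'eq by (simp add: algebra_simps)
  moreover have "\<eta>' x > 0" using \<open>x \<in> \<Theta>\<close> \<eta>'_pos by blast
  ultimately show "0 \<le> \<eta>' x * z - A' x" using x assms by simp
qed

lemma Lf_antimono:
  assumes "z \<in> \<Theta>" "a \<in> \<Theta>" "b \<in> \<Theta>" "a \<le> b" "z \<le> a"
  shows "Lf z b \<le> Lf z a"
proof -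
  have d: "((\<lambda>t. - Lf z t) has_real_derivative - (\<eta>' t * z - A' t)) (at t within \<Theta>)" if "t \<in> \<Theta>" for t
    using Lf_deriv[OF that] by (intro derivative_eq_intros) auto
  have "- Lf z a \<le> - Lf z b"
  proof (rule mono_within[OF interval d assms(2,3,4)])
    fix x assume x: "a < x" "x < b"
    then have "x \<in> \<Theta>" using in_between[OF assms(2,3)] by auto
    then have "\<eta>' x * z - A' x = \<eta>' x * (z - x)" using A'eq by (simp add: algebra_simps)
    moreover have "\<eta>' x > 0" using \<open>x \<in> \<Theta>\<close> \<eta>'_pos by blast
    moreover have "z - x \<le> 0" using x assms by simp
    ultimately show "0 \<le> - (\<eta>' x * z - A' x)" by (simp add: mult_nonneg_nonpos)
  qed
  then show ?thesis by simp
qed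

lemma Lf_max: "z \<in> \<Theta> \<Longrightarrow> \<theta> \<in> \<Theta> \<Longrightarrow> Lf z \<theta> \<le> Lf z z"
  by (cases "\<theta> \<le> z") (auto intro: Lf_mono Lf_antimono)

lemma M_fun_Lf: "M_fun \<eta> A n z \<theta> = (exp (Lf z \<theta>) / exp (Lf z z)) ^ n"
  unfolding M_fun_def Lf_def ..

lemma M_mono_in_L: "Lf z a \<le> Lf z b \<Longrightarrow> M_fun \<eta> A n z a \<le> M_fun \<eta> A n z b"
  unfolding M_fun_Lf by (intro power_mono divide_right_mono) auto

lemma part3:
  assumes z: "z \<in> \<Theta>"
  shows "mono_on {\<theta>\<in>\<Theta>. \<theta> \<le> z} (\<lambda>\<theta>. M_fun \<eta> A n z \<theta>)
       \<and> antimono_on {\<theta>\<in>\<Theta>. \<theta> \<ge> z} (\<lambda>\<theta>. M_fun \<eta> A n z \<theta>)"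
proof
  show "mono_on {\<theta>\<in>\<Theta>. \<theta> \<le> z} (\<lambda>\<theta>. M_fun \<eta> A n z \<theta>)"
    by (intro mono_onI M_mono_in_L Lf_mono[OF z]) auto
  show "antimono_on {\<theta>\<in>\<Theta>. \<theta> \<ge> z} (\<lambda>\<theta>. M_fun \<eta> A n z \<theta>)"
    unfolding monotone_on_def by (auto intro!: M_mono_in_L Lf_antimono[OF z])
qed

definition G :: "real \<Rightarrow> real \<Rightarrow> real" where "G \<theta> z = (\<eta> \<theta> - \<eta> z) * z - (A \<theta> - A z)"

lemma G_deriv: "z \<in> \<Theta> \<Longrightarrow> (G \<theta> has_real_derivative (\<eta> \<theta> - \<eta> z)) (at z within \<Theta>)"
proof -
  assume z: "z \<in> \<Theta>"
  have "(G \<theta> has_real_derivative ((0 - \<eta>' z) * z + (\<eta> \<theta> - \<eta> z) * 1 - (0 - A' z))) (at z within \<Theta>)"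
    unfolding G_def[abs_def] using \<eta>_deriv[OF z] A_deriv[OF z] by (auto intro!: derivative_eq_intros)
  moreover have "(0 - \<eta>' z) * z + (\<eta> \<theta> - \<eta> z) * 1 - (0 - A' z) = \<eta> \<theta> - \<eta> z"
    using A'eq z by (simp add: algebra_simps)
  ultimately show ?thesis by simp
qed

lemma M_fun_G: "M_fun \<eta> A n z \<theta> = exp (real n * G \<theta> z)"
  unfolding M_fun_eq G_def ..

lemma part4:
  assumes \<theta>: "\<theta> \<in> \<Theta>"
  shows "mono_on {z\<in>\<Theta>. z \<le> \<theta>} (\<lambda>z. M_fun \<eta> A n z \<theta>)
       \<and> antimono_on {z\<in>\<Theta>. z \<ge> \<theta>} (\<lambda>z. M_fun \<eta> A n z \<theta>)"
proof
  show "mono_on {z\<in>\<Theta>. z \<le> \<theta>} (\<lambda>z. M_fun \<eta> A n z \<theta>)"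
  proof (rule mono_onI)
    fix a b assume ab: "a \<in> {z\<in>\<Theta>. z \<le> \<theta>}" "b \<in> {z\<in>\<Theta>. z \<le> \<theta>}" "a \<le> b"
    have "G \<theta> a \<le> G \<theta> b"
    proof (rule mono_within[OF interval G_deriv])
      fix x assume x: "a < x" "x < b"
      then have "x \<in> \<Theta>" using in_between[of a b x] ab by auto
      then show "0 \<le> \<eta> \<theta> - \<eta> x" using \<eta>_mono[OF _ \<theta>, of x] x ab by auto
    qed (use ab in auto)
    then show "M_fun \<eta> A n a \<theta> \<le> M_fun \<eta> A n b \<theta>"
      unfolding M_fun_G by (simp add: mult_left_mono)
  qed
  show "antimono_on {z\<in>\<Theta>. z \<ge> \<theta>} (\<lambda>z. M_fun \<eta> A n z \<theta>)"
    unfolding monotone_on_def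
  proof (intro ballI impI)
    fix a b assume ab': "a \<in> {z\<in>\<Theta>. \<theta> \<le> z}" "b \<in> {z\<in>\<Theta>. \<theta> \<le> z}" "a \<le> b"
    then have ab: "a \<in> {z\<in>\<Theta>. z \<ge> \<theta>} \<and> b \<in> {z\<in>\<Theta>. z \<ge> \<theta>} \<and> a \<le> b" by auto
    have d: "((\<lambda>t. - G \<theta> t) has_real_derivative - (\<eta> \<theta> - \<eta> t)) (at t within \<Theta>)" if "t \<in> \<Theta>" for t
      using G_deriv[OF that] by (intro derivative_eq_intros) auto
    have "- G \<theta> a \<le> - G \<theta> b"
    proof (rule mono_within[OF interval d])
      fix x assume x: "a < x" "x < b"
      then have "x \<in> \<Theta>" using in_between[of a b x] ab by auto
      then show "0 \<le> - (\<eta> \<theta> - \<eta> x)" using \<eta>_mono[OF \<theta>, of x] x ab by auto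
    qed (use ab in auto)
    then show "M_fun \<eta> A n b \<theta> \<le> M_fun \<eta> A n a \<theta>"
      unfolding M_fun_G by (simp add: mult_left_mono)
  qed
qed

lemma part_ML:
  assumes x: "x \<in> space (PiM {..<n} (\<lambda>_. \<mu>))" and hx: "theta_hat T n x \<in> \<Theta>" and \<theta>: "\<theta> \<in> \<Theta>"
  shows "likelihood h T \<eta> A n \<theta> x \<le> likelihood h T \<eta> A n (theta_hat T n x) x"
proof -
  let ?z = "theta_hat T n x"
  have xi: "x i \<in> space \<mu>" if "i < n" for i using x that by (auto simp: space_PiM)
  have H: "(\<Prod>i<n. h (x i)) \<ge> 0" using xi h_nonneg by (auto intro!: prod_nonneg)
  have lik: "likelihood h T \<eta> A n t x = (\<Prod>i<n. h (x i)) * exp (real n * Lf ?z t)" for t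
  proof -
    have "likelihood h T \<eta> A n t x = (\<Prod>i<n. h (x i)) * (\<Prod>i<n. exp (\<eta> t * T (x i) - A t))"
      unfolding likelihood_def expfam_density_def by (simp add: prod.distrib)
    also have "(\<Prod>i<n. exp (\<eta> t * T (x i) - A t)) = exp (\<Sum>i<n. \<eta> t * T (x i) - A t)"
      by (simp add: exp_sum)
    also have "(\<Sum>i<n. \<eta> t * T (x i) - A t) = real n * Lf ?z t"
      using n_pos unfolding Lf_def theta_hat_def
      by (simp add: sum_subtractf sum_distrib_left[symmetric] algebra_simps)
    finally show ?thesis .
  qed
  have "Lf ?z \<theta> \<le> Lf ?z ?z" by (rule Lf_max[OF hx \<theta>])
  then have "real n * Lf ?z \<theta> \<le> real n * Lf ?z ?z" by (intro mult_left_mono) auto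
  then show ?thesis unfolding lik using H by (intro mult_left_mono) auto
qed

end
end



context expfam begin

lemma comp_meas: "i < n \<Longrightarrow> (\<lambda>x. x i) \<in> measurable (Pn \<theta>) (P \<theta>)"
  unfolding Pn_def by (rule measurable_component_singleton) simp

lemma comp_distr: "\<theta> \<in> \<Theta> \<Longrightarrow> i < n \<Longrightarrow> distr (Pn \<theta>) (P \<theta>) (\<lambda>x. x i) = P \<theta>"
  unfolding Pn_def by (rule distr_PiM_component) (auto intro: is_density)

context
  assumes A'eq: "\<forall>\<theta>\<in>\<Theta>. A' \<theta> = \<theta> * \<eta>' \<theta>" and two: "\<exists>a\<in>\<Theta>. \<exists>b\<in>\<Theta>. a < b"
begin

lemma unbiased:
  assumes \<theta>: "\<theta> \<in> \<Theta>"
  shows "integrable (Pn \<theta>) (theta_hat T n) \<and> (\<integral>x. theta_hat T n x \<partial>Pn \<theta>) = \<theta>"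
proof -
  have m: "integrable (P \<theta>) T" "(\<integral>x. T x \<partial>P \<theta>) = \<theta>" using mean[OF A'eq two \<theta>] by auto
  have ii: "integrable (Pn \<theta>) (\<lambda>x. T (x i))" if "i < n" for i
  proof -
    have "integrable (distr (Pn \<theta>) (P \<theta>) (\<lambda>x. x i)) T" using m comp_distr[OF \<theta> that] by simp
    then show ?thesis using integrable_distr_eq[OF comp_meas[OF that] T_meas_P] by simp
  qed
  have ie: "(\<integral>x. T (x i) \<partial>Pn \<theta>) = \<theta>" if "i < n" for i
    using integral_distr[OF comp_meas[OF that] T_meas_P, of \<theta>] m comp_distr[OF \<theta> that] by simp
  have eq: "theta_hat T n = (\<lambda>x. (\<Sum>i<n. T (x i)) / real n)"
    unfolding theta_hat_def[abs_def] ..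
  have "integrable (Pn \<theta>) (theta_hat T n)"
    unfolding eq using ii by (intro integrable_divide integrable_sum) auto
  moreover have "(\<integral>x. theta_hat T n x \<partial>Pn \<theta>) = \<theta>"
    unfolding eq using ii ie n_pos by (simp add: integral_sum)
  ultimately show ?thesis by blast
qed

lemma mgf_prod:
  assumes \<theta>: "\<theta> \<in> \<Theta>"
  shows "(\<integral>\<^sup>+x. ennreal (exp (real n * t * (theta_hat T n x - z))) \<partial>Pn \<theta>)
       = (\<integral>\<^sup>+x. ennreal (exp (t * (T x - z))) \<partial>P \<theta>) ^ n"
proof -
  interpret PS: product_sigma_finite "\<lambda>_. P \<theta>"
    unfolding product_sigma_finite_def using is_density[OF \<theta>] prob_space_imp_sigma_finite by blast
  have "(\<integral>\<^sup>+x. ennreal (exp (real n * t * (theta_hat T n x - z))) \<partial>Pn \<theta>)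
      = (\<integral>\<^sup>+x. (\<Prod>i\<in>{..<n}. ennreal (exp (t * (T (x i) - z)))) \<partial>Pn \<theta>)"
  proof (rule nn_integral_cong)
    fix x
    have "real n * t * (theta_hat T n x - z) = (\<Sum>i<n. t * (T (x i) - z))"
      using n_pos unfolding theta_hat_def
      by (simp add: sum_subtractf sum_distrib_left[symmetric] algebra_simps)
    then have "exp (real n * t * (theta_hat T n x - z)) = (\<Prod>i<n. exp (t * (T (x i) - z)))"
      by (simp add: exp_sum)
    then show "ennreal (exp (real n * t * (theta_hat T n x - z))) = (\<Prod>i\<in>{..<n}. ennreal (exp (t * (T (x i) - z))))"
      by (simp add: prod_ennreal)
  qed
  also have "\<dots> = (\<Prod>i\<in>{..<n}. (\<integral>\<^sup>+y. ennreal (exp (t * (T y - z))) \<partial>P \<theta>))"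
    unfolding Pn_def
    by (rule PS.product_nn_integral_prod[where f="\<lambda>i y. ennreal (exp (t * (T y - z)))"]) auto
  also have "\<dots> = (\<integral>\<^sup>+x. ennreal (exp (t * (T x - z))) \<partial>P \<theta>) ^ n" by simp
  finally show ?thesis .
qed

lemma mgf_single:
  assumes \<theta>: "\<theta> \<in> \<Theta>" and z: "z \<in> \<Theta>"
  shows "(\<integral>\<^sup>+x. ennreal (exp (t * (T x - z))) \<partial>P \<theta>)
       = ennreal (exp (((\<eta> \<theta> - \<eta> z) * z - (A \<theta> - A z)))) * (\<integral>\<^sup>+x. ennreal (exp ((t + \<eta> \<theta> - \<eta> z) * (T x - z))) \<partial>P z)"
proof -
  have "(\<integral>\<^sup>+x. ennreal (exp (t * (T x - z))) \<partial>P \<theta>)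
      = (\<integral>\<^sup>+x. ennreal (r \<theta> z x) * ennreal (exp (t * (T x - z))) \<partial>P z)"
    by (rule nn_P_tilt) measurable
  also have "\<dots> = (\<integral>\<^sup>+x. ennreal (exp (((\<eta> \<theta> - \<eta> z) * z - (A \<theta> - A z)))) * ennreal (exp ((t + \<eta> \<theta> - \<eta> z) * (T x - z))) \<partial>P z)"
  proof (rule nn_integral_cong)
    fix x
    have "r \<theta> z x * exp (t * (T x - z)) = exp (((\<eta> \<theta> - \<eta> z) * z - (A \<theta> - A z))) * exp ((t + \<eta> \<theta> - \<eta> z) * (T x - z))"
      unfolding r_def by (simp add: exp_add[symmetric]) (simp add: algebra_simps)
    then show "ennreal (r \<theta> z x) * ennreal (exp (t * (T x - z)))
        = ennreal (exp (((\<eta> \<theta> - \<eta> z) * z - (A \<theta> - A z)))) * ennreal (exp ((t + \<eta> \<theta> - \<eta> z) * (T x - z)))"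
      using r_pos[of \<theta> z x] by (simp add: ennreal_mult[symmetric])
  qed
  also have "\<dots> = ennreal (exp (((\<eta> \<theta> - \<eta> z) * z - (A \<theta> - A z)))) * (\<integral>\<^sup>+x. ennreal (exp ((t + \<eta> \<theta> - \<eta> z) * (T x - z))) \<partial>P z)"
    by (rule nn_integral_cmult) measurable
  finally show ?thesis .
qed

lemma mgf_ge1:
  assumes z: "z \<in> \<Theta>"
  shows "1 \<le> (\<integral>\<^sup>+x. ennreal (exp (w * (T x - z))) \<partial>P z)"
proof (cases "(\<integral>\<^sup>+x. ennreal (exp (w * (T x - z))) \<partial>P z) = \<infinity>")
  case False
  interpret Pz: prob_space "P z" using is_density[OF z] .
  have m: "integrable (P z) T" "(\<integral>x. T x \<partial>P z) = z" using mean[OF A'eq two z] by auto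
  have fm: "(\<lambda>x. exp (w * (T x - z))) \<in> borel_measurable (P z)" by measurable
  have int: "integrable (P z) (\<lambda>x. exp (w * (T x - z)))"
    using False by (intro integrableI_nonneg fm) (auto simp: less_top)
  have int2: "integrable (P z) (\<lambda>x. 1 + w * (T x - z))"
    using m by (intro Bochner_Integration.integrable_add integrable_mult_right Bochner_Integration.integrable_diff) auto
  have p1: "Pz.prob (space \<mu>) = 1" using Pz.prob_space by simp
  have "(\<integral>x. 1 + w * (T x - z) \<partial>P z) = 1"
    using m p1 by (simp add: Bochner_Integration.integral_add Bochner_Integration.integral_diff int2 Pz.prob_space)
  moreover have "(\<integral>x. 1 + w * (T x - z) \<partial>P z) \<le> (\<integral>x. exp (w * (T x - z)) \<partial>P z)"
    by (intro integral_mono int int2) (rule exp_ge_add_one_self)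
  ultimately have "1 \<le> (\<integral>x. exp (w * (T x - z)) \<partial>P z)" by simp
  moreover have "(\<integral>\<^sup>+x. ennreal (exp (w * (T x - z))) \<partial>P z) = ennreal (\<integral>x. exp (w * (T x - z)) \<partial>P z)"
    by (rule nn_integral_eq_integral[OF int]) auto
  ultimately show ?thesis by simp
qed simp

lemma part_chernoff:
  assumes z: "z \<in> \<Theta>" and \<theta>: "\<theta> \<in> \<Theta>"
  shows "ennreal (M_fun \<eta> A n z \<theta>)
            = (INF t::real. \<integral>\<^sup>+ x. ennreal (exp (real n * t * (theta_hat T n x - z))) \<partial>Pn \<theta>)
        \<and> ennreal (M_fun \<eta> A n z \<theta>)
            = (\<integral>\<^sup>+ x. ennreal (exp (real n * (\<eta> z - \<eta> \<theta>) * (theta_hat T n x - z))) \<partial>Pn \<theta>)"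
proof -
  interpret Pz: prob_space "P z" using is_density[OF z] .
  let ?F = "\<lambda>t. \<integral>\<^sup>+ x. ennreal (exp (real n * t * (theta_hat T n x - z))) \<partial>Pn \<theta>"
  have Mval: "ennreal (M_fun \<eta> A n z \<theta>) = ennreal (exp (((\<eta> \<theta> - \<eta> z) * z - (A \<theta> - A z)))) ^ n"
    unfolding M_fun_eq by (simp add: ennreal_power exp_of_nat_mult)
  have F: "?F t = (ennreal (exp (((\<eta> \<theta> - \<eta> z) * z - (A \<theta> - A z)))) * (\<integral>\<^sup>+x. ennreal (exp ((t + \<eta> \<theta> - \<eta> z) * (T x - z))) \<partial>P z)) ^ n" for t
    unfolding mgf_prod[OF \<theta>] mgf_single[OF \<theta> z] ..
  have lb: "ennreal (M_fun \<eta> A n z \<theta>) \<le> ?F t" for t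
    unfolding Mval F
  proof -
    let ?c = "ennreal (exp ((\<eta> \<theta> - \<eta> z) * z - (A \<theta> - A z)))"
    have "?c * 1 \<le> ?c * (\<integral>\<^sup>+x. ennreal (exp ((t + \<eta> \<theta> - \<eta> z) * (T x - z))) \<partial>P z)"
      by (rule mult_left_mono[OF mgf_ge1[OF z]]) auto
    then show "?c ^ n \<le> (?c * (\<integral>\<^sup>+x. ennreal (exp ((t + \<eta> \<theta> - \<eta> z) * (T x - z))) \<partial>P z)) ^ n"
      by (intro power_mono) auto
  qed
  have at: "?F (\<eta> z - \<eta> \<theta>) = ennreal (M_fun \<eta> A n z \<theta>)"
    unfolding Mval F using Pz.emeasure_space_1 by simp
  have "ennreal (M_fun \<eta> A n z \<theta>) = (INF t. ?F t)"
  proof (rule antisym)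
    show "ennreal (M_fun \<eta> A n z \<theta>) \<le> (INF t. ?F t)" by (rule INF_greatest) (rule lb)
    show "(INF t. ?F t) \<le> ennreal (M_fun \<eta> A n z \<theta>)" using INF_lower[of "\<eta> z - \<eta> \<theta>" UNIV ?F] at by simp
  qed
  then show ?thesis using at by simp
qed

end
end



context expfam begin

context
  assumes A'eq: "\<forall>\<theta>\<in>\<Theta>. A' \<theta> = \<theta> * \<eta>' \<theta>" and two: "\<exists>a\<in>\<Theta>. \<exists>b\<in>\<Theta>. a < b"
begin

lemma not_AE_const:
  assumes z: "z \<in> \<Theta>" and ae: "AE x in P z. T x = z"
  shows False
proof -
  obtain s where s: "s \<in> \<Theta>" "s \<noteq> z" using two by (metis less_irrefl)
  have rm: "(\<lambda>x. ennreal (r s z x)) \<in> borel_measurable (P z)"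
    by (intro measurable_compose[OF r_meas[OF T_meas_P] measurable_ennreal])
  have "AE x in P s. T x = z"
    unfolding P_tilt[of s z] AE_density[OF rm] using ae by (auto elim: eventually_mono)
  then have "(\<integral>x. T x \<partial>P s) = (\<integral>x. z \<partial>P s)"
    by (intro integral_cong_AE T_meas_P borel_measurable_const) auto
  also have "\<dots> = z" using prob_space.prob_space[OF is_density[OF s(1)]] by simp
  finally show False using mean[OF A'eq two s(1)] s(2) by simp
qed

lemma pos_moment:
  assumes z: "z \<in> \<Theta>" and k: "k > 0" and int: "integrable (P z) (\<lambda>x. \<bar>T x - z\<bar> ^ k)"
  shows "(\<integral>x. \<bar>T x - z\<bar> ^ k \<partial>P z) > 0"
proof (rule ccontr)
  assume "\<not> ?thesis"
  moreover have "(\<integral>x. \<bar>T x - z\<bar> ^ k \<partial>P z) \<ge> 0" by (rule integral_nonneg_AE) auto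
  ultimately have "(\<integral>x. \<bar>T x - z\<bar> ^ k \<partial>P z) = 0" by simp
  then have "AE x in P z. \<bar>T x - z\<bar> ^ k = 0"
    using integral_nonneg_eq_0_iff_AE[OF int] by auto
  then have "AE x in P z. T x = z" using k by (auto elim: eventually_mono)
  then show False by (rule not_AE_const[OF z])
qed

lemma int_lower:
  assumes z: "z \<in> \<Theta>" and int: "integrable (P z) (\<lambda>x. \<bar>T x - z\<bar> ^ Suc k)"
  shows "integrable (P z) (\<lambda>x. \<bar>T x - z\<bar> ^ k)"
proof -
  interpret Pz: prob_space "P z" using is_density[OF z] .
  have b: "\<bar>a\<bar> ^ k \<le> 1 + \<bar>a\<bar> ^ Suc k" for a :: real
  proof (cases "\<bar>a\<bar> \<le> 1")
    case True then have "\<bar>a\<bar> ^ k \<le> 1" by (simp add: power_le_one)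
    then show ?thesis by (simp add: add_increasing2)
  next
    case False then have "\<bar>a\<bar> ^ k \<le> \<bar>a\<bar> ^ Suc k" by (intro power_increasing) auto
    then show ?thesis by simp
  qed
  show ?thesis
    by (rule Bochner_Integration.integrable_bound[where f="\<lambda>x. 1 + \<bar>T x - z\<bar> ^ Suc k"])
       (use int b in \<open>auto intro!: Bochner_Integration.integrable_add\<close>)
qed

lemma be_apply:
  assumes BE: "berry_esseen_const C" and z: "z \<in> \<Theta>"
    and int3: "integrable (P z) (\<lambda>x. \<bar>T x - z\<bar> ^ 3)" and \<sigma>: "\<bar>\<sigma>\<bar> = 1"
  shows "measure (Pn z) {x \<in> space (Pn z). (\<Sum>i<n. \<sigma> * (T (x i) - z)) \<le> 0}
          \<le> 1/2 + C / sqrt (real n) *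
               ((\<integral>x. \<bar>T x - z\<bar> ^ 3 \<partial>P z) / (\<integral>x. \<bar>T x - z\<bar> ^ 2 \<partial>P z) powr (3/2))"
    and "0 \<le> C"
proof -
  interpret Pz: prob_space "P z" using is_density[OF z] .
  define g where "g x = \<sigma> * (T x - z)" for x
  have gm[measurable]: "g \<in> borel_measurable (P z)" unfolding g_def by measurable
  define Q where "Q = distr (P z) borel g"
  have pQ: "prob_space Q" unfolding Q_def by (rule Pz.prob_space_distr[OF gm])
  have sQ: "sets Q = sets borel" unfolding Q_def by simp
  have g3: "\<bar>g x\<bar> ^ 3 = \<bar>T x - z\<bar> ^ 3" for x unfolding g_def using \<sigma> by (simp add: abs_mult power_mult_distrib)
  have g2: "(g x)\<^sup>2 = \<bar>T x - z\<bar> ^ 2" for x unfolding g_def using \<sigma>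
    by (simp add: power_mult_distrib) (metis abs_power2 power2_abs power_one)
  have m: "integrable (P z) T" "(\<integral>x. T x \<partial>P z) = z" using mean[OF A'eq two z] by auto
  have int2: "integrable (P z) (\<lambda>x. \<bar>T x - z\<bar> ^ 2)" using int_lower[OF z, of 2] int3 by (simp add: numeral_eq_Suc)
  have v: "(\<integral>x. \<bar>T x - z\<bar> ^ 2 \<partial>P z) > 0" by (rule pos_moment[OF z _ int2]) simp
  have e3: "(\<integral>x. \<bar>T x - z\<bar> ^ 3 \<partial>P z) > 0" by (rule pos_moment[OF z _ int3]) simp
  have qi: "integrable Q (\<lambda>y. \<bar>y\<bar> ^ 3)"
    unfolding Q_def using int3 by (subst integrable_distr_eq) (auto simp: g3)
  have q3: "(\<integral>t. \<bar>t\<bar> ^ 3 \<partial>Q) = (\<integral>x. \<bar>T x - z\<bar> ^ 3 \<partial>P z)"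
    unfolding Q_def by (subst integral_distr) (auto simp: g3)
  have q2: "(\<integral>t. t\<^sup>2 \<partial>Q) = (\<integral>x. \<bar>T x - z\<bar> ^ 2 \<partial>P z)"
    unfolding Q_def by (subst integral_distr) (auto simp: g2)
  have q1: "(\<integral>t. t \<partial>Q) = 0"
  proof -
    have "(\<integral>t. t \<partial>Q) = (\<integral>x. g x \<partial>P z)" unfolding Q_def by (subst integral_distr) auto
    also have "\<dots> = \<sigma> * ((\<integral>x. T x \<partial>P z) - z)"
      unfolding g_def using m Pz.prob_space by (simp add: Bochner_Integration.integral_diff)
    finally show ?thesis using m by simp
  qed
  let ?v = "\<integral>t. t\<^sup>2 \<partial>Q"
  let ?R = "(\<integral>x. \<bar>T x - z\<bar> ^ 3 \<partial>P z) / (\<integral>x. \<bar>T x - z\<bar> ^ 2 \<partial>P z) powr (3/2)"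
  define S where "S = {x \<in> space (PiM {..<n} (\<lambda>_. Q)). (\<Sum>i<n. x i) / sqrt (real n * ?v) \<le> 0}"
  have q2v: "?v > 0" using q2 v by simp
  note be0 = BE[unfolded berry_esseen_const_def, rule_format, OF conjI[OF pQ conjI[OF sQ conjI[OF qi conjI[OF q1 q2v]]]] n_pos]
  have be: "\<bar>measure (PiM {..<n} (\<lambda>_. Q)) S - std_normal_cdf 0\<bar> \<le> C / sqrt (real n) * ?R"
    unfolding S_def q3[symmetric] q2[symmetric] by (rule be0)
  have Rpos: "?R > 0" using v e3 by simp
  have "0 \<le> C / sqrt (real n) * ?R" using be by (rule order_trans[OF abs_ge_zero])
  then have "0 \<le> C / sqrt (real n)" using Rpos mult_neg_pos[of "C / sqrt (real n)" ?R] by linarith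
  then show "0 \<le> C" using n_pos by (simp add: divide_nonneg_pos[of C] zero_le_divide_iff)
  have gQ: "g \<in> measurable (P z) Q" using gm by (simp add: measurable_cong_sets[OF refl sQ])
  have Qeq: "distr (P z) Q g = Q"
  proof (rule measure_eqI)
    show "sets (distr (P z) Q g) = sets Q" by simp
    fix A assume "A \<in> sets (distr (P z) Q g)"
    then have A: "A \<in> sets borel" using sQ by simp
    show "emeasure (distr (P z) Q g) A = emeasure Q A"
      using A sQ gQ unfolding Q_def by (simp add: emeasure_distr)
  qed
  have prodeq: "PiM {..<n} (\<lambda>_. Q) = distr (Pn z) (PiM {..<n} (\<lambda>_. Q)) (compose {..<n} g)"
    unfolding Pn_def
    using distr_PiM_finite_prob_space'[of "{..<n}" "\<lambda>_. P z" "\<lambda>_. Q" g] pQ is_density[OF z] gQ Qeq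
    by simp
  have cm: "compose {..<n} g \<in> measurable (Pn z) (PiM {..<n} (\<lambda>_. Q))"
  proof -
    have "(\<lambda>x. \<lambda>i\<in>{..<n}. g (x i)) \<in> measurable (Pn z) (PiM {..<n} (\<lambda>_. Q))"
      unfolding Pn_def
      by (intro measurable_restrict measurable_compose[OF measurable_component_singleton[of _ "{..<n}" "\<lambda>_. P z"] gQ]) auto
    then show ?thesis by (simp add: compose_def[abs_def])
  qed
  have fm: "(\<lambda>x. (\<Sum>i<n. x i) / sqrt (real n * ?v)) \<in> borel_measurable (PiM {..<n} (\<lambda>_. Q))"
  proof -
    have "(\<lambda>x. x i) \<in> borel_measurable (PiM {..<n} (\<lambda>_. Q))" if "i < n" for i
      using measurable_component_singleton[of i "{..<n}" "\<lambda>_. Q"] that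
      by (simp add: measurable_cong_sets[OF refl sQ])
    then show ?thesis by (intro borel_measurable_divide borel_measurable_sum) auto
  qed
  have Sm: "S \<in> sets (PiM {..<n} (\<lambda>_. Q))"
  proof -
    have "S = (\<lambda>x. (\<Sum>i<n. x i) / sqrt (real n * ?v)) -` {..0} \<inter> space (PiM {..<n} (\<lambda>_. Q))"
      unfolding S_def by auto
    then show ?thesis using measurable_sets[OF fm, of "{..0}"] by simp
  qed
  have sqpos: "sqrt (real n * ?v) > 0" using n_pos v q2 by simp
  have pre: "compose {..<n} g -` S \<inter> space (Pn z) = {x \<in> space (Pn z). (\<Sum>i<n. \<sigma> * (T (x i) - z)) \<le> 0}"
  proof -
    have "x \<in> S \<longleftrightarrow> (\<Sum>i<n. \<sigma> * (T (y i) - z)) \<le> 0" if "x = compose {..<n} g y" "y \<in> space (Pn z)" for x y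
    proof -
      have "x \<in> space (PiM {..<n} (\<lambda>_. Q))" using measurable_space[OF cm that(2)] that(1) by simp
      moreover have "(\<Sum>i<n. x i) = (\<Sum>i<n. \<sigma> * (T (y i) - z))"
        using that(1) by (simp add: compose_def g_def)
      ultimately show ?thesis unfolding S_def using sqpos by (simp add: divide_le_0_iff)
    qed
    then show ?thesis by auto
  qed
  have "measure (PiM {..<n} (\<lambda>_. Q)) S = measure (Pn z) {x \<in> space (Pn z). (\<Sum>i<n. \<sigma> * (T (x i) - z)) \<le> 0}"
    by (subst prodeq, subst measure_distr[OF cm Sm]) (simp add: pre)
  then show "measure (Pn z) {x \<in> space (Pn z). (\<Sum>i<n. \<sigma> * (T (x i) - z)) \<le> 0} \<le> 1/2 + C / sqrt (real n) * ?R"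
    using be std_normal_cdf_0 by simp
qed

end
end



lemma young34:
  fixes y s :: real assumes s: "s > 0"
  shows "\<bar>y\<bar> ^ 3 \<le> 3 / 4 * (\<bar>y\<bar> ^ 4 / s) + s ^ 3 / 4"
proof -
  define a where "a = \<bar>y\<bar>"
  have a: "a \<ge> 0" unfolding a_def by simp
  have id: "3 * a ^ 4 - 4 * s * a ^ 3 + s ^ 4 = (a - s)\<^sup>2 * (3 * a\<^sup>2 + 2 * a * s + s\<^sup>2)"
    by (simp add: power2_eq_square power4_eq_xxxx power3_eq_cube algebra_simps)
  have "0 \<le> (a - s)\<^sup>2 * (3 * a\<^sup>2 + 2 * a * s + s\<^sup>2)" using a s by (intro mult_nonneg_nonneg) auto
  then have "4 * s * a ^ 3 \<le> 3 * a ^ 4 + s ^ 4" using id by linarith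
  then have "s * (4 * a ^ 3) \<le> s * (3 * (a ^ 4 / s) + s ^ 3)" using s
    by (simp add: algebra_simps power3_eq_cube power4_eq_xxxx)
  then have "4 * a ^ 3 \<le> 3 * (a ^ 4 / s) + s ^ 3" using s by (simp add: mult_le_cancel_left_pos)
  then show ?thesis unfolding a_def by simp
qed

context expfam begin

context
  assumes A'eq: "\<forall>\<theta>\<in>\<Theta>. A' \<theta> = \<theta> * \<eta>' \<theta>" and two: "\<exists>a\<in>\<Theta>. \<exists>b\<in>\<Theta>. a < b"
begin

lemma sum_sigma: "(\<Sum>i<n. \<sigma> * (T (x i) - z)) = \<sigma> * ((\<Sum>i<n. T (x i)) - real n * z)"
  by (simp add: sum_distrib_left[symmetric] sum_subtractf)

lemma part5:
  assumes BE: "berry_esseen_const C" and z: "z \<in> \<Theta>"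
    and int3: "integrable (P z) (\<lambda>x. \<bar>T x - z\<bar> ^ 3)"
  shows "measure (Pn z) {x \<in> space (Pn z). theta_hat T n x \<ge> z}
          \<le> 1/2 + C / sqrt (real n) *
               ((\<integral>x. \<bar>T x - z\<bar> ^ 3 \<partial>P z) / (\<integral>x. \<bar>T x - z\<bar> ^ 2 \<partial>P z) powr (3/2))
        \<and> measure (Pn z) {x \<in> space (Pn z). theta_hat T n x \<le> z}
          \<le> 1/2 + C / sqrt (real n) *
               ((\<integral>x. \<bar>T x - z\<bar> ^ 3 \<partial>P z) / (\<integral>x. \<bar>T x - z\<bar> ^ 2 \<partial>P z) powr (3/2))"
proof
  have "{x \<in> space (Pn z). theta_hat T n x \<ge> z} = {x \<in> space (Pn z). (\<Sum>i<n. (-1) * (T (x i) - z)) \<le> 0}"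
    unfolding sum_sigma hat_ge_iff by auto
  then show "measure (Pn z) {x \<in> space (Pn z). theta_hat T n x \<ge> z}
          \<le> 1/2 + C / sqrt (real n) *
               ((\<integral>x. \<bar>T x - z\<bar> ^ 3 \<partial>P z) / (\<integral>x. \<bar>T x - z\<bar> ^ 2 \<partial>P z) powr (3/2))"
    using be_apply(1)[OF A'eq two BE z int3, of "-1"] by simp
  have "{x \<in> space (Pn z). theta_hat T n x \<le> z} = {x \<in> space (Pn z). (\<Sum>i<n. 1 * (T (x i) - z)) \<le> 0}"
    unfolding sum_sigma hat_le_iff by auto
  then show "measure (Pn z) {x \<in> space (Pn z). theta_hat T n x \<le> z}
          \<le> 1/2 + C / sqrt (real n) *
               ((\<integral>x. \<bar>T x - z\<bar> ^ 3 \<partial>P z) / (\<integral>x. \<bar>T x - z\<bar> ^ 2 \<partial>P z) powr (3/2))"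
    using be_apply(1)[OF A'eq two BE z int3, of 1] by simp
qed

lemma part6:
  assumes BE: "berry_esseen_const C" and z: "z \<in> \<Theta>"
    and int4: "integrable (P z) (\<lambda>x. \<bar>T x - z\<bar> ^ 4)"
  shows "1/2 + C / sqrt (real n) *
               ((\<integral>x. \<bar>T x - z\<bar> ^ 3 \<partial>P z) / (\<integral>x. \<bar>T x - z\<bar> ^ 2 \<partial>P z) powr (3/2))
          \<le> 1/2 + C / sqrt (real n) *
               ((\<integral>x. \<bar>T x - z\<bar> ^ 4 \<partial>P z) powr (3/4) / (\<integral>x. \<bar>T x - z\<bar> ^ 2 \<partial>P z) powr (3/2))"
proof -
  interpret Pz: prob_space "P z" using is_density[OF z] .
  have int3: "integrable (P z) (\<lambda>x. \<bar>T x - z\<bar> ^ 3)"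
    using int_lower[OF A'eq two z, of 3] int4 by (simp add: numeral_eq_Suc)
  have int2: "integrable (P z) (\<lambda>x. \<bar>T x - z\<bar> ^ 2)"
    using int_lower[OF A'eq two z, of 2] int3 by (simp add: numeral_eq_Suc)
  have C: "0 \<le> C" using be_apply(2)[OF A'eq two BE z int3, of 1] by simp
  let ?E4 = "\<integral>x. \<bar>T x - z\<bar> ^ 4 \<partial>P z"
  have E4: "?E4 > 0" by (rule pos_moment[OF A'eq two z _ int4]) simp
  have v: "(\<integral>x. \<bar>T x - z\<bar> ^ 2 \<partial>P z) > 0" by (rule pos_moment[OF A'eq two z _ int2]) simp
  define s where "s = ?E4 powr (1/4)"
  have s: "s > 0" unfolding s_def using E4 by simp
  have s3: "s ^ 3 = ?E4 powr (3/4)"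
    unfolding s_def using E4 by (simp add: powr_realpow[symmetric] powr_powr)
  have s4: "s ^ 4 = ?E4"
    unfolding s_def using E4 by (simp add: powr_realpow[symmetric] powr_powr)
  have "(\<integral>x. \<bar>T x - z\<bar> ^ 3 \<partial>P z) \<le> (\<integral>x. 3 / 4 * (\<bar>T x - z\<bar> ^ 4 / s) + s ^ 3 / 4 \<partial>P z)"
    using int3 int4 young34[OF s] by (intro integral_mono) (auto intro!: Bochner_Integration.integrable_add)
  also have "\<dots> = 3 / 4 * (?E4 / s) + s ^ 3 / 4"
    using int4 Pz.prob_space by (simp add: Bochner_Integration.integral_add)
  also have "?E4 / s = s ^ 3" using s s4[symmetric] by (simp add: power_Suc2 numeral_eq_Suc)
  finally have "(\<integral>x. \<bar>T x - z\<bar> ^ 3 \<partial>P z) \<le> ?E4 powr (3/4)" using s3 by simp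
  then have "(\<integral>x. \<bar>T x - z\<bar> ^ 3 \<partial>P z) / (\<integral>x. \<bar>T x - z\<bar> ^ 2 \<partial>P z) powr (3/2)
        \<le> ?E4 powr (3/4) / (\<integral>x. \<bar>T x - z\<bar> ^ 2 \<partial>P z) powr (3/2)"
    using v by (intro divide_right_mono) auto
  then have "C / sqrt (real n) * ((\<integral>x. \<bar>T x - z\<bar> ^ 3 \<partial>P z) / (\<integral>x. \<bar>T x - z\<bar> ^ 2 \<partial>P z) powr (3/2))
        \<le> C / sqrt (real n) * (?E4 powr (3/4) / (\<integral>x. \<bar>T x - z\<bar> ^ 2 \<partial>P z) powr (3/2))"
    by (rule mult_left_mono) (use C in simp)
  then show ?thesis by (rule add_left_mono)
qed

end
end

theorem theorem3:
  fixes \<mu> :: "'a measure"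
    and h T :: "'a \<Rightarrow> real"
    and \<eta> A \<eta>' A' :: "real \<Rightarrow> real"
    and \<Theta> :: "real set"
    and n :: nat
    and C :: real
  assumes interval: "is_interval \<Theta>"
    and h_meas: "h \<in> borel_measurable \<mu>"
    and T_meas: "T \<in> borel_measurable \<mu>"
    and h_nonneg: "\<And>x. x \<in> space \<mu> \<Longrightarrow> h x \<ge> 0"
    and is_density: "\<And>\<theta>. \<theta> \<in> \<Theta> \<Longrightarrow> prob_space (expfam_law \<mu> h T \<eta> A \<theta>)"
    and \<eta>_deriv: "\<And>\<theta>. \<theta> \<in> \<Theta> \<Longrightarrow> (\<eta> has_real_derivative \<eta>' \<theta>) (at \<theta> within \<Theta>)"
    and A_deriv: "\<And>\<theta>. \<theta> \<in> \<Theta> \<Longrightarrow> (A has_real_derivative A' \<theta>) (at \<theta> within \<Theta>)"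
    and \<eta>'_pos: "\<And>\<theta>. \<theta> \<in> \<Theta> \<Longrightarrow> \<eta>' \<theta> > 0"
    and n_pos: "n \<ge> 1"
    and BE: "berry_esseen_const C"
  shows
   "(\<forall>z\<in>\<Theta>. \<forall>\<theta>\<in>\<Theta>. z \<ge> \<theta> \<longrightarrow>
       measure (sample_law \<mu> h T \<eta> A n \<theta>)
         {x \<in> space (sample_law \<mu> h T \<eta> A n \<theta>). theta_hat T n x \<ge> z}
       \<le> M_fun \<eta> A n z \<theta> *
         measure (sample_law \<mu> h T \<eta> A n z)
           {x \<in> space (sample_law \<mu> h T \<eta> A n z). theta_hat T n x \<ge> z})
  \<and> (\<forall>z\<in>\<Theta>. \<forall>\<theta>\<in>\<Theta>. z \<le> \<theta> \<longrightarrow>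
       measure (sample_law \<mu> h T \<eta> A n \<theta>)
         {x \<in> space (sample_law \<mu> h T \<eta> A n \<theta>). theta_hat T n x \<le> z}
       \<le> M_fun \<eta> A n z \<theta> *
         measure (sample_law \<mu> h T \<eta> A n z)
           {x \<in> space (sample_law \<mu> h T \<eta> A n z). theta_hat T n x \<le> z})
  \<and> (((\<forall>\<theta>\<in>\<Theta>. A' \<theta> = \<theta> * \<eta>' \<theta>) \<and> (\<exists>a\<in>\<Theta>. \<exists>b\<in>\<Theta>. a < b)) \<longrightarrow>
      \<comment> \<open>(i) maximum likelihood and unbiased\<close>
      (\<forall>x\<in>space (PiM {..<n} (\<lambda>_. \<mu>)). theta_hat T n x \<in> \<Theta> \<longrightarrow>
          (\<forall>\<theta>\<in>\<Theta>. likelihood h T \<eta> A n \<theta> x \<le> likelihood h T \<eta> A n (theta_hat T n x) x))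
    \<and> (\<forall>\<theta>\<in>\<Theta>. integrable (sample_law \<mu> h T \<eta> A n \<theta>) (theta_hat T n)
          \<and> (\<integral>x. theta_hat T n x \<partial>sample_law \<mu> h T \<eta> A n \<theta>) = \<theta>)
      \<comment> \<open>(ii) M is the Chernoff bound, infimum attained at eta z - eta theta\<close>
    \<and> (\<forall>z\<in>\<Theta>. \<forall>\<theta>\<in>\<Theta>.
          ennreal (M_fun \<eta> A n z \<theta>)
            = (INF t::real. \<integral>\<^sup>+ x. ennreal (exp (real n * t * (theta_hat T n x - z)))
                               \<partial>sample_law \<mu> h T \<eta> A n \<theta>)
        \<and> ennreal (M_fun \<eta> A n z \<theta>)
            = (\<integral>\<^sup>+ x. ennreal (exp (real n * (\<eta> z - \<eta> \<theta>) * (theta_hat T n x - z)))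
                   \<partial>sample_law \<mu> h T \<eta> A n \<theta>))
      \<comment> \<open>(iii) monotonicity in theta\<close>
    \<and> (\<forall>z\<in>\<Theta>. mono_on {\<theta>\<in>\<Theta>. \<theta> \<le> z} (\<lambda>\<theta>. M_fun \<eta> A n z \<theta>)
              \<and> antimono_on {\<theta>\<in>\<Theta>. \<theta> \<ge> z} (\<lambda>\<theta>. M_fun \<eta> A n z \<theta>))
      \<comment> \<open>(iv) monotonicity in z\<close>
    \<and> (\<forall>\<theta>\<in>\<Theta>. mono_on {z\<in>\<Theta>. z \<le> \<theta>} (\<lambda>z. M_fun \<eta> A n z \<theta>)
              \<and> antimono_on {z\<in>\<Theta>. z \<ge> \<theta>} (\<lambda>z. M_fun \<eta> A n z \<theta>))
      \<comment> \<open>(v) Berry--Esseen bounds\<close>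
    \<and> (\<forall>z\<in>\<Theta>. integrable (expfam_law \<mu> h T \<eta> A z) (\<lambda>x. \<bar>T x - z\<bar> ^ 3) \<longrightarrow>
          measure (sample_law \<mu> h T \<eta> A n z)
            {x \<in> space (sample_law \<mu> h T \<eta> A n z). theta_hat T n x \<ge> z}
          \<le> 1/2 + C / sqrt (real n) *
               ((\<integral>x. \<bar>T x - z\<bar> ^ 3 \<partial>expfam_law \<mu> h T \<eta> A z)
                / (\<integral>x. \<bar>T x - z\<bar> ^ 2 \<partial>expfam_law \<mu> h T \<eta> A z) powr (3/2))
        \<and> measure (sample_law \<mu> h T \<eta> A n z)
            {x \<in> space (sample_law \<mu> h T \<eta> A n z). theta_hat T n x \<le> z}
          \<le> 1/2 + C / sqrt (real n) *
               ((\<integral>x. \<bar>T x - z\<bar> ^ 3 \<partial>expfam_law \<mu> h T \<eta> A z)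
                / (\<integral>x. \<bar>T x - z\<bar> ^ 2 \<partial>expfam_law \<mu> h T \<eta> A z) powr (3/2)))
    \<and> (\<forall>z\<in>\<Theta>. integrable (expfam_law \<mu> h T \<eta> A z) (\<lambda>x. \<bar>T x - z\<bar> ^ 4) \<longrightarrow>
          1/2 + C / sqrt (real n) *
               ((\<integral>x. \<bar>T x - z\<bar> ^ 3 \<partial>expfam_law \<mu> h T \<eta> A z)
                / (\<integral>x. \<bar>T x - z\<bar> ^ 2 \<partial>expfam_law \<mu> h T \<eta> A z) powr (3/2))
          \<le> 1/2 + C / sqrt (real n) *
               ((\<integral>x. \<bar>T x - z\<bar> ^ 4 \<partial>expfam_law \<mu> h T \<eta> A z) powr (3/4)
                / (\<integral>x. \<bar>T x - z\<bar> ^ 2 \<partial>expfam_law \<mu> h T \<eta> A z) powr (3/2))))"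
proof -
  interpret E: expfam \<mu> h T \<eta> A \<eta>' A' \<Theta> n
    using interval h_meas T_meas h_nonneg is_density \<eta>_deriv A_deriv \<eta>'_pos n_pos
    by (rule expfam.intro)
  have p1: "\<forall>z\<in>\<Theta>. \<forall>\<theta>\<in>\<Theta>. z \<ge> \<theta> \<longrightarrow>
       measure (sample_law \<mu> h T \<eta> A n \<theta>)
         {x \<in> space (sample_law \<mu> h T \<eta> A n \<theta>). theta_hat T n x \<ge> z}
       \<le> M_fun \<eta> A n z \<theta> *
         measure (sample_law \<mu> h T \<eta> A n z)
           {x \<in> space (sample_law \<mu> h T \<eta> A n z). theta_hat T n x \<ge> z}"
    using E.part1 by blast
  have p2: "\<forall>z\<in>\<Theta>. \<forall>\<theta>\<in>\<Theta>. z \<le> \<theta> \<longrightarrow>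
       measure (sample_law \<mu> h T \<eta> A n \<theta>)
         {x \<in> space (sample_law \<mu> h T \<eta> A n \<theta>). theta_hat T n x \<le> z}
       \<le> M_fun \<eta> A n z \<theta> *
         measure (sample_law \<mu> h T \<eta> A n z)
           {x \<in> space (sample_law \<mu> h T \<eta> A n z). theta_hat T n x \<le> z}"
    using E.part2 by blast
  show ?thesis
  proof (intro conjI p1 p2 impI)
    assume H: "(\<forall>\<theta>\<in>\<Theta>. A' \<theta> = \<theta> * \<eta>' \<theta>) \<and> (\<exists>a\<in>\<Theta>. \<exists>b\<in>\<Theta>. a < b)"
    then have A'eq: "\<forall>\<theta>\<in>\<Theta>. A' \<theta> = \<theta> * \<eta>' \<theta>" and two: "\<exists>a\<in>\<Theta>. \<exists>b\<in>\<Theta>. a < b" by auto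
    show "\<forall>x\<in>space (PiM {..<n} (\<lambda>_. \<mu>)). theta_hat T n x \<in> \<Theta> \<longrightarrow>
          (\<forall>\<theta>\<in>\<Theta>. likelihood h T \<eta> A n \<theta> x \<le> likelihood h T \<eta> A n (theta_hat T n x) x)"
      using E.part_ML[OF A'eq] by blast
    show "\<forall>\<theta>\<in>\<Theta>. integrable (sample_law \<mu> h T \<eta> A n \<theta>) (theta_hat T n)
          \<and> (\<integral>x. theta_hat T n x \<partial>sample_law \<mu> h T \<eta> A n \<theta>) = \<theta>"
      using E.unbiased[OF A'eq two] by blast
    show "\<forall>z\<in>\<Theta>. \<forall>\<theta>\<in>\<Theta>.
          ennreal (M_fun \<eta> A n z \<theta>)
            = (INF t::real. \<integral>\<^sup>+ x. ennreal (exp (real n * t * (theta_hat T n x - z)))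
                               \<partial>sample_law \<mu> h T \<eta> A n \<theta>)
        \<and> ennreal (M_fun \<eta> A n z \<theta>)
            = (\<integral>\<^sup>+ x. ennreal (exp (real n * (\<eta> z - \<eta> \<theta>) * (theta_hat T n x - z)))
                   \<partial>sample_law \<mu> h T \<eta> A n \<theta>)"
      using E.part_chernoff[OF A'eq two] by blast
    show "\<forall>z\<in>\<Theta>. mono_on {\<theta>\<in>\<Theta>. \<theta> \<le> z} (\<lambda>\<theta>. M_fun \<eta> A n z \<theta>)
              \<and> antimono_on {\<theta>\<in>\<Theta>. \<theta> \<ge> z} (\<lambda>\<theta>. M_fun \<eta> A n z \<theta>)"
      using E.part3[OF A'eq] by blast
    show "\<forall>\<theta>\<in>\<Theta>. mono_on {z\<in>\<Theta>. z \<le> \<theta>} (\<lambda>z. M_fun \<eta> A n z \<theta>)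
              \<and> antimono_on {z\<in>\<Theta>. z \<ge> \<theta>} (\<lambda>z. M_fun \<eta> A n z \<theta>)"
      using E.part4[OF A'eq] by blast
    show "\<forall>z\<in>\<Theta>. integrable (expfam_law \<mu> h T \<eta> A z) (\<lambda>x. \<bar>T x - z\<bar> ^ 3) \<longrightarrow>
          measure (sample_law \<mu> h T \<eta> A n z)
            {x \<in> space (sample_law \<mu> h T \<eta> A n z). theta_hat T n x \<ge> z}
          \<le> 1/2 + C / sqrt (real n) *
               ((\<integral>x. \<bar>T x - z\<bar> ^ 3 \<partial>expfam_law \<mu> h T \<eta> A z)
                / (\<integral>x. \<bar>T x - z\<bar> ^ 2 \<partial>expfam_law \<mu> h T \<eta> A z) powr (3/2))
        \<and> measure (sample_law \<mu> h T \<eta> A n z)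
            {x \<in> space (sample_law \<mu> h T \<eta> A n z). theta_hat T n x \<le> z}
          \<le> 1/2 + C / sqrt (real n) *
               ((\<integral>x. \<bar>T x - z\<bar> ^ 3 \<partial>expfam_law \<mu> h T \<eta> A z)
                / (\<integral>x. \<bar>T x - z\<bar> ^ 2 \<partial>expfam_law \<mu> h T \<eta> A z) powr (3/2))"
      using E.part5[OF A'eq two BE] by blast
    show "\<forall>z\<in>\<Theta>. integrable (expfam_law \<mu> h T \<eta> A z) (\<lambda>x. \<bar>T x - z\<bar> ^ 4) \<longrightarrow>
          1/2 + C / sqrt (real n) *
               ((\<integral>x. \<bar>T x - z\<bar> ^ 3 \<partial>expfam_law \<mu> h T \<eta> A z)
                / (\<integral>x. \<bar>T x - z\<bar> ^ 2 \<partial>expfam_law \<mu> h T \<eta> A z) powr (3/2))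
          \<le> 1/2 + C / sqrt (real n) *
               ((\<integral>x. \<bar>T x - z\<bar> ^ 4 \<partial>expfam_law \<mu> h T \<eta> A z) powr (3/4)
                / (\<integral>x. \<bar>T x - z\<bar> ^ 2 \<partial>expfam_law \<mu> h T \<eta> A z) powr (3/2))"
      using E.part6[OF A'eq two BE] by blast
  qed
qed

end
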